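(* Let $T>0$, $w\in W$ and $\alpha\in\Delta$ with $\ell(ws_\alpha)=\ell(w)+1$. (1) If $\pi$ is a low path of type $w$, then $c:=1/\int_0^Te^{-\alpha(\pi(s))}ds>0$ and $\eta=e^{-\infty}_\alpha\pi$ is a low path of type $ws_\alpha$. (2) Conversely, given a low path $\eta$ of type $ws_\alpha$ and $c>0$, there is a unique low path $\pi$ of type $w$ such that $c=1/\int_0^Te^{-\alpha(\pi)}$ and $\eta=e^{-\infty}_\alpha\pi$; it is given by $\pi(t)=\eta(t)+\log\big(1+c\int_0^te^{-\alpha(\eta(s))}ds\big)\alpha^\vee$ for $0\le t<T$.
   Context: $\mathfrak a$ is the real Cartan subalgebra of a complex semisimple Lie algebra, $\Delta$ the simple roots, $\alpha^\vee$ coroots, $W$ the Weyl group with simple reflections $s_\alpha$ and length $\ell$. $\rho^\vee=\sum_{\alpha\in\Delta}\omega^\vee_\alpha$, $(\omega^\vee_\alpha)$ the basis of $\mathfrak a$ dual to the simple roots. Constants $c_w\in\mathfrak a$: $c_e=0$ and whenever $w=us_\alpha$ with $\ell(w)=\ell(u)+1$, $c_w=s_\alpha c_u-\log((u\alpha)(\rho^\vee))\alpha^\vee$ (independent of the decomposition). A low path of type $w$ is a continuous $\pi:[0,T)\to\mathfrak a$ with $\pi(0)=0$ such that for some $C_\pi\in\mathfrak a$, $\pi(t)=C_\pi+\log(T-t)(\rho^\vee-w^{-1}\rho^\vee)+c_w+o(1)$ as $t\to T$. For such $\pi$, $e^{-\infty}_\alpha\pi(t)=\pi(t)+\log\Big(1-\frac{\int_0^te^{-\alpha(\pi(s))}ds}{\int_0^Te^{-\alpha(\pi(s))}ds}\Big)\alpha^\vee$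 for $0\le t<T$. *)

theory Defs
  imports "HOL-Analysis.Analysis"
begin

text \<open>The real Cartan subalgebra is modelled as a Euclidean space 'a, carrying a
  W-invariant inner product; a root beta is identified with the functional
  x |-> beta \<bullet> x.  The set of simple roots of a complex semisimple Lie algebra
  is, up to this identification, a basis of 'a consisting of pairwise
  non-acute vectors with integral Cartan numbers (a base of a reduced
  crystallographic root system).\<close>

definition simple_system :: "'a::euclidean_space set \<Rightarrow> bool" where
  "simple_system D \<longleftrightarrow> finite D \<and> independent D \<and> span D = UNIV \<and>
     (\<forall>a\<in>D. \<forall>b\<in>D. a \<noteq> b \<longrightarrow> a \<bullet> b \<le> 0) \<and>
     (\<forall>a\<in>D. \<forall>b\<in>D. 2 * (b \<bullet> a) / (a \<bullet> a) \<in> \<int>)"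

definition coroot :: "'a::euclidean_space \<Rightarrow> 'a" where
  "coroot a = (2 / (a \<bullet> a)) *\<^sub>R a"

definition refl :: "'a::euclidean_space \<Rightarrow> 'a \<Rightarrow> 'a" where
  "refl a x = x - (a \<bullet> x) *\<^sub>R coroot a"

fun wordmap :: "'a::euclidean_space list \<Rightarrow> 'a \<Rightarrow> 'a" where
  "wordmap [] = id"
| "wordmap (a # as) = refl a \<circ> wordmap as"

definition weyl :: "'a::euclidean_space set \<Rightarrow> ('a \<Rightarrow> 'a) set" where
  "weyl D = {wordmap as | as. set as \<subseteq> D}"

definition wlen :: "'a::euclidean_space set \<Rightarrow> ('a \<Rightarrow> 'a) \<Rightarrow> nat" where
  "wlen D w = (LEAST n. \<exists>as. set as \<subseteq> D \<and> length as = n \<and> wordmap as = w)"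

definition reduced_word :: "'a::euclidean_space set \<Rightarrow> ('a \<Rightarrow> 'a) \<Rightarrow> 'a list \<Rightarrow> bool" where
  "reduced_word D w as \<longleftrightarrow> set as \<subseteq> D \<and> wordmap as = w \<and> length as = wlen D w"

definition coweight :: "'a::euclidean_space set \<Rightarrow> 'a \<Rightarrow> 'a" where
  "coweight D a = (THE v. \<forall>b\<in>D. b \<bullet> v = (if b = a then 1 else 0))"

definition rho_vee :: "'a::euclidean_space set \<Rightarrow> 'a" where
  "rho_vee D = (\<Sum>a\<in>D. coweight D a)"

text \<open>The constant c_w computed along a word given in reversed order:
  for w = u s_a (word of u followed by a), c_w = s_a c_u - log((u a)(rho^vee)) a^vee.\<close>
fun crev :: "'a::euclidean_space set \<Rightarrow> 'a list \<Rightarrow> 'a" where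
  "crev D [] = 0"
| "crev D (a # bs) = refl a (crev D bs) - ln (wordmap (rev bs) a \<bullet> rho_vee D) *\<^sub>R coroot a"

text \<open>c_w via a reduced word (the paper asserts independence of the choice).\<close>
definition cconst :: "'a::euclidean_space set \<Rightarrow> ('a \<Rightarrow> 'a) \<Rightarrow> 'a" where
  "cconst D w = crev D (rev (SOME as. reduced_word D w as))"

definition low_path :: "'a::euclidean_space set \<Rightarrow> real \<Rightarrow> ('a \<Rightarrow> 'a) \<Rightarrow> (real \<Rightarrow> 'a) \<Rightarrow> bool" where
  "low_path D T w p \<longleftrightarrow> continuous_on {0..<T} p \<and> p 0 = 0 \<and>
     (\<exists>C. ((\<lambda>t. p t - (C + ln (T - t) *\<^sub>R (rho_vee D - inv w (rho_vee D)) + cconst D w))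
            \<longlongrightarrow> 0) (at_left T))"

definition eminf :: "'a::euclidean_space \<Rightarrow> real \<Rightarrow> (real \<Rightarrow> 'a) \<Rightarrow> real \<Rightarrow> 'a" where
  "eminf a T p t = p t + ln (1 - integral {0..t} (\<lambda>s. exp (- (a \<bullet> p s)))
                                / integral {0..T} (\<lambda>s. exp (- (a \<bullet> p s)))) *\<^sub>R coroot a"

end

theory Submission
  imports Defs
begin


lemma refl_add: "refl a (x + y) = refl a x + refl a y"
  by (simp add: refl_def inner_add_right algebra_simps)
lemma refl_scale: "refl a (c *\<^sub>R x) = c *\<^sub>R refl a x"
  by (simp add: refl_def algebra_simps)
lemma linear_refl: "linear (refl a)"
  by (rule linearI) (simp_all add: refl_add refl_scale)

lemma inner_coroot: "a \<noteq> 0 \<Longrightarrow> a \<bullet> coroot a = 2"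
  by (simp add: coroot_def)

lemma refl_inner: "a \<noteq> 0 \<Longrightarrow> refl a x \<bullet> refl a y = x \<bullet> y"
  by (simp add: refl_def coroot_def inner_diff_left inner_diff_right inner_commute algebra_simps)

lemma refl_refl: "a \<noteq> 0 \<Longrightarrow> refl a (refl a x) = x"
  by (simp add: refl_def coroot_def inner_diff_right algebra_simps)

lemma refl_self: "a \<noteq> 0 \<Longrightarrow> refl a a = - a"
  by (simp add: refl_def coroot_def scaleR_2)

lemma refl_comp_refl: "a \<noteq> 0 \<Longrightarrow> refl a \<circ> refl a = id"
  by (auto simp: refl_refl)

lemma wordmap_append: "wordmap (xs @ ys) = wordmap xs \<circ> wordmap ys"
  by (induction xs) auto

lemma linear_wordmap: "linear (wordmap xs)"
proof (induction xs)
  case Nil then show ?case by simp (rule linearI, auto)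
next
  case (Cons a xs) then show ?case using linear_compose[OF Cons.IH linear_refl[of a]] by (simp add: comp_def)
qed

lemma wordmap_inner: "0 \<notin> set xs \<Longrightarrow> wordmap xs x \<bullet> wordmap xs y = x \<bullet> y"
  by (induction xs) (auto simp: refl_inner)

lemma wordmap_rev_inv: "0 \<notin> set xs \<Longrightarrow> wordmap (rev xs) (wordmap xs x) = x"
  by (induction xs arbitrary: x) (auto simp: wordmap_append refl_refl)

lemma wordmap_inv_rev: "0 \<notin> set xs \<Longrightarrow> wordmap xs (wordmap (rev xs) x) = x"
  using wordmap_rev_inv[of "rev xs"] by simp

lemma wordmap_bij: "0 \<notin> set xs \<Longrightarrow> bij (wordmap xs)"
  by (rule bij_betw_byWitness[where f'="wordmap (rev xs)"]) (auto simp: wordmap_inv_rev wordmap_rev_inv)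

lemma wordmap_inv: "0 \<notin> set xs \<Longrightarrow> inv (wordmap xs) = wordmap (rev xs)"
  by (rule inv_equality) (auto simp: wordmap_inv_rev wordmap_rev_inv)

lemma simple_system_nz: "simple_system D \<Longrightarrow> 0 \<notin> D"
  unfolding simple_system_def using dependent_zero by blast

lemma wlen_ex: "w \<in> weyl D \<Longrightarrow> \<exists>as. set as \<subseteq> D \<and> length as = wlen D w \<and> wordmap as = w"
  unfolding weyl_def wlen_def
  by (rule LeastI_ex) blast

lemma wlen_le: "set as \<subseteq> D \<Longrightarrow> wlen D (wordmap as) \<le> length as"
  unfolding wlen_def by (rule Least_le) blast

lemma weyl_word: "set as \<subseteq> D \<Longrightarrow> wordmap as \<in> weyl D"
  unfolding weyl_def by blast

lemma wlen_comp: "v \<in> weyl D \<Longrightarrow> y \<in> weyl I \<Longrightarrow> I \<subseteq> D \<Longrightarrow>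
  wlen D (v \<circ> y) \<le> wlen D v + wlen I y"
proof -
  assume "v \<in> weyl D" "y \<in> weyl I" "I \<subseteq> D"
  then obtain as bs where "set as \<subseteq> D" "length as = wlen D v" "wordmap as = v"
    "set bs \<subseteq> I" "length bs = wlen I y" "wordmap bs = y"
    using wlen_ex by metis
  then show ?thesis using wlen_le[of "as @ bs" D] \<open>I \<subseteq> D\<close> by (auto simp: wordmap_append)
qed

lemma weyl_comp: "v \<in> weyl D \<Longrightarrow> y \<in> weyl I \<Longrightarrow> I \<subseteq> D \<Longrightarrow> v \<circ> y \<in> weyl D"
proof -
  assume "v \<in> weyl D" "y \<in> weyl I" "I \<subseteq> D"
  then obtain as bs where "set as \<subseteq> D" "wordmap as = v" "set bs \<subseteq> I" "wordmap bs = y"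
    unfolding weyl_def by blast
  moreover have "set (as @ bs) \<subseteq> D" using calculation \<open>I \<subseteq> D\<close> by auto
  ultimately show ?thesis using weyl_word[of "as @ bs" D] by (simp add: wordmap_append)
qed

lemma refl_weyl: "s \<in> D \<Longrightarrow> refl s \<in> weyl D"
  using weyl_word[of "[s]" D] by simp

lemma wlen0: "w \<in> weyl D \<Longrightarrow> wlen D w = 0 \<Longrightarrow> w = id"
  using wlen_ex by fastforce


lemma aux_field: "(N::real) \<noteq> 0 \<Longrightarrow> (a + f*N + g*c)*(2/N) = 2*a/N + f + f + 2*c/N*g"
  by (simp add: field_simps)

definition phi :: "'a \<Rightarrow> real \<Rightarrow> real \<Rightarrow> real \<Rightarrow> real \<Rightarrow> 'a list \<Rightarrow> real \<times> real" where
  "phi s A B P Q u = foldr (\<lambda>c r. if c = s then (- fst r - P - A * snd r, snd r)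
                                  else (fst r, - snd r - Q - B * fst r)) u (0,0)"

lemma phi_Nil[simp]: "phi s A B P Q [] = (0,0)" by (simp add: phi_def)
lemma phi_Cons[simp]: "phi s A B P Q (c # u) = (let r = phi s A B P Q u in
   if c = s then (- fst r - P - A * snd r, snd r) else (fst r, - snd r - Q - B * fst r))"
  by (simp add: phi_def Let_def)

lemma wordmap_phi:
  fixes s t :: "'a::euclidean_space"
  assumes "s \<noteq> 0" "t \<noteq> 0" "set u \<subseteq> {s,t}"
  shows "wordmap u x = x + fst (phi s (2*(s\<bullet>t)/(s\<bullet>s)) (2*(s\<bullet>t)/(t\<bullet>t)) (2*(s\<bullet>x)/(s\<bullet>s)) (2*(t\<bullet>x)/(t\<bullet>t)) u) *\<^sub>R s
            + snd (phi s (2*(s\<bullet>t)/(s\<bullet>s)) (2*(s\<bullet>t)/(t\<bullet>t)) (2*(s\<bullet>x)/(s\<bullet>s)) (2*(t\<bullet>x)/(t\<bullet>t)) u) *\<^sub>R t"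
  using assms(3)
proof (induction u)
  case Nil then show ?case by simp
next
  case (Cons c u)
  define A where "A = 2*(s\<bullet>t)/(s\<bullet>s)"
  define B where "B = 2*(s\<bullet>t)/(t\<bullet>t)"
  define P where "P = 2*(s\<bullet>x)/(s\<bullet>s)"
  define Q where "Q = 2*(t\<bullet>x)/(t\<bullet>t)"
  obtain f g where fg: "phi s A B P Q u = (f, g)" by force
  have IH: "wordmap u x = x + f *\<^sub>R s + g *\<^sub>R t"
    using Cons fg unfolding A_def B_def P_def Q_def by simp
  have ss: "s \<bullet> s \<noteq> 0" "t \<bullet> t \<noteq> 0" using assms by auto
  show ?case
  proof (cases "c = s")
    case True
    have e: "(s \<bullet> (x + f *\<^sub>R s + g *\<^sub>R t)) * (2 / (s \<bullet> s)) = P + f + f + A * g"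
    proof -
      have "s \<bullet> (x + f *\<^sub>R s + g *\<^sub>R t) = s \<bullet> x + f * (s \<bullet> s) + g * (s \<bullet> t)"
        by (simp add: inner_add_right)
      then have "(s \<bullet> (x + f *\<^sub>R s + g *\<^sub>R t)) * (2 / (s \<bullet> s)) = (s \<bullet> x + f * (s \<bullet> s) + g * (s \<bullet> t)) * (2 / (s \<bullet> s))"
        by (simp only:)
      also have "\<dots> = 2*(s \<bullet> x)/(s \<bullet> s) + f + f + 2*(s \<bullet> t)/(s \<bullet> s)*g"
        by (rule aux_field) (use ss in simp)
      finally show ?thesis unfolding A_def P_def .
    qed 

    have "wordmap (c # u) x = (x + f *\<^sub>R s + g *\<^sub>R t) - (P + f + f + A * g) *\<^sub>R s"
      using True IH e by (simp add: refl_def coroot_def)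
    also have "\<dots> = x + (- f - P - A * g) *\<^sub>R s + g *\<^sub>R t"
      by (simp add: algebra_simps) (metis mult_2_right scaleR_add_left)
    moreover have "phi s A B P Q (c # u) = (- f - P - A * g, g)" using True fg by simp
    ultimately show ?thesis unfolding A_def B_def P_def Q_def by (simp only: fst_conv snd_conv)
  next
    case False
    then have ct: "c = t" using Cons.prems by auto
    have e: "(t \<bullet> (x + f *\<^sub>R s + g *\<^sub>R t)) * (2 / (t \<bullet> t)) = Q + B * f + g + g"
      using ss by (simp add: B_def Q_def inner_add_right inner_commute[of t s] field_simps) 

    have "wordmap (c # u) x = (x + f *\<^sub>R s + g *\<^sub>R t) - (Q + B * f + g + g) *\<^sub>R t"
      using ct IH e by (simp add: refl_def coroot_def)
    also have "\<dots> = x + f *\<^sub>R s + (- g - Q - B * f) *\<^sub>R t"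
      by (simp add: algebra_simps) (metis mult_2_right scaleR_add_left)
    moreover have "phi s A B P Q (c # u) = (f, - g - Q - B * f)" using False fg by simp
    ultimately show ?thesis unfolding A_def B_def P_def Q_def by (simp only: fst_conv snd_conv)
  qed
qed

fun alt :: "'a \<Rightarrow> 'a \<Rightarrow> nat \<Rightarrow> 'a list" where
  "alt s t 0 = []"
| "alt s t (Suc k) = (if even k then t else s) # alt s t k"

lemma length_alt[simp]: "length (alt s t k) = k" by (induction k) auto
lemma set_alt: "set (alt s t k) \<subseteq> {s,t}" by (induction k) auto

lemma alt_suffix: "\<exists>p. alt s t (j + m) = p @ alt s t m"
  by (induction j) (auto intro: exI[of _ "_ # _"])

lemma alt_last: "\<exists>q. alt s t (Suc k) = q @ [t]"
proof (induction k)
  case 0 then show ?case by simp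
next
  case (Suc k)
  then obtain q where "alt s t (Suc k) = q @ [t]" by blast
  then show ?case by (metis alt.simps(2) append_Cons)
qed

lemma alt_char:
  assumes "set u \<subseteq> {s,t}" "s \<noteq> t" "\<forall>p c q. u \<noteq> p @ c # c # q" "u = [] \<or> last u = t"
  shows "u = alt s t (length u)"
  using assms
proof (induction u)
  case Nil then show ?case by simp
next
  case (Cons c u)
  show ?case
  proof (cases "u = []")
    case True then show ?thesis using Cons.prems by simp
  next
    case False
    have nd: "\<forall>p c q. u \<noteq> p @ c # c # q"
    proof (intro allI notI)
      fix p c' q assume "u = p @ c' # c' # q"
      then have "c # u = (c # p) @ c' # c' # q" by simp
      then show False using Cons.prems(3) by blast
    qed
    have "u = alt s t (length u)" using Cons.IH Cons.prems nd False by auto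
    then obtain k where k: "length u = Suc k" "u = alt s t (Suc k)" using False
      by (metis length_0_conv not0_implies_Suc)
    have "c \<noteq> hd u"
    proof
      assume "c = hd u"
      then have "c # u = [] @ c # c # tl u" using False by simp
      then show False using Cons.prems(3) by blast
    qed
    then have "c \<noteq> (if even k then t else s)" using k by simp
    then have "c = (if even (Suc k) then t else s)" using Cons.prems(1) by auto
    then show ?thesis using k by simp
  qed
qed


lemma alt_snoc: "alt s t (Suc k) = alt t s k @ [t]"
  by (induction k arbitrary: s t) auto

definition goodm :: "'a \<Rightarrow> 'a \<Rightarrow> real \<Rightarrow> real \<Rightarrow> nat \<Rightarrow> bool" where
  "goodm s t A B m \<longleftrightarrow> m > 0 \<and> (\<forall>P Q. phi s A B P Q (alt s t m) = phi s A B P Q (alt t s m)) \<and>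
     (\<forall>k<m. 0 \<le> 1 + fst (phi s A B 2 B (alt s t k)) \<and> 0 \<le> snd (phi s A B 2 B (alt s t k)))"

lemma good00: "s \<noteq> t \<Longrightarrow> goodm s t 0 0 2"
  by (auto simp: goodm_def eval_nat_numeral All_less_Suc Let_def alt_snoc simp del: alt.simps(2))
lemma good11: "s \<noteq> t \<Longrightarrow> goodm s t (-1) (-1) 3"
  by (auto simp: goodm_def eval_nat_numeral All_less_Suc Let_def alt_snoc simp del: alt.simps(2))
lemma good12: "s \<noteq> t \<Longrightarrow> goodm s t (-1) (-2) 4"
  by (auto simp: goodm_def eval_nat_numeral All_less_Suc Let_def alt_snoc simp del: alt.simps(2))
lemma good21: "s \<noteq> t \<Longrightarrow> goodm s t (-2) (-1) 4"
  by (auto simp: goodm_def eval_nat_numeral All_less_Suc Let_def alt_snoc simp del: alt.simps(2))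
lemma good13: "s \<noteq> t \<Longrightarrow> goodm s t (-1) (-3) 6"
  by (auto simp: goodm_def eval_nat_numeral All_less_Suc Let_def alt_snoc simp del: alt.simps(2))
lemma good31: "s \<noteq> t \<Longrightarrow> goodm s t (-3) (-1) 6"
  by (auto simp: goodm_def eval_nat_numeral All_less_Suc Let_def alt_snoc simp del: alt.simps(2))

lemma int_cases:
  fixes a b :: int
  assumes "a \<le> 0" "b \<le> 0" "a*b < 4" "a = 0 \<longleftrightarrow> b = 0"
  shows "(a,b) \<in> {(0,0),(-1,-1),(-1,-2),(-2,-1),(-1,-3),(-3,-1)}"
proof -
  have "a \<ge> -3"
  proof (rule ccontr)
    assume "\<not> a \<ge> -3"
    then have "b \<le> -1" using assms by auto
    then have "(-a) * (-b) \<ge> 4 * 1" using \<open>\<not> a \<ge> -3\<close> by (intro mult_mono) auto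
    then show False using assms by simp
  qed
  moreover have "b \<ge> -3"
  proof (rule ccontr)
    assume "\<not> b \<ge> -3"
    then have "a \<le> -1" using assms by auto
    then have "(-a) * (-b) \<ge> 1 * 4" using \<open>\<not> b \<ge> -3\<close> by (intro mult_mono) auto
    then show False using assms by simp
  qed
  ultimately have "a \<in> {-3,-2,-1,0}" "b \<in> {-3,-2,-1,0}" using assms by auto
  then show ?thesis using assms by auto
qed

lemma rank2_cases:
  fixes s t :: 'a and A B :: real
  assumes "s \<noteq> t" "A \<in> \<int>" "B \<in> \<int>" "A \<le> 0" "B \<le> 0" "A*B < 4" "A = 0 \<longleftrightarrow> B = 0"
  shows "\<exists>m. goodm s t A B m"
proof -
  obtain a b where ab: "A = of_int a" "B = of_int b" using assms(2,3) by (auto elim!: Ints_cases)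
  have "a \<le> 0" "b \<le> 0" "a*b < 4" "a = 0 \<longleftrightarrow> b = 0" using assms ab
    by (simp_all, metis of_int_less_iff of_int_mult of_int_numeral)
  from int_cases[OF this] have "(a,b) = (0,0) \<or> (a,b) = (-1,-1) \<or> (a,b) = (-1,-2) \<or> (a,b) = (-2,-1) \<or> (a,b) = (-1,-3) \<or> (a,b) = (-3,-1)"
    by auto
  then show ?thesis
    apply (elim disjE)
    using good00[OF assms(1)] good11[OF assms(1)] good12[OF assms(1)] good21[OF assms(1)]
      good13[OF assms(1)] good31[OF assms(1)] by (simp_all add: ab, blast+)
qed


lemma weyl_linear: "w \<in> weyl D \<Longrightarrow> linear w"
  unfolding weyl_def using linear_wordmap by blast

lemma strict_cs:
  fixes s t :: "'a::euclidean_space"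
  assumes "independent {s,t}" "s \<noteq> t" "t \<noteq> 0"
  shows "(s \<bullet> t)^2 < (s \<bullet> s) * (t \<bullet> t)"
proof (rule ccontr)
  assume "\<not> ?thesis"
  then have h: "(s \<bullet> t)^2 \<ge> (s \<bullet> s) * (t \<bullet> t)" by simp
  define v where "v = (t \<bullet> t) *\<^sub>R s - (s \<bullet> t) *\<^sub>R t"
  have "v \<bullet> v = (t \<bullet> t) * ((t \<bullet> t) * (s \<bullet> s) - (s \<bullet> t)^2)"
    unfolding v_def by (simp add: inner_diff_left inner_diff_right inner_commute[of t s] power2_eq_square algebra_simps)
  also have "\<dots> \<le> 0" using h by (intro mult_nonneg_nonpos) (auto simp: algebra_simps)
  finally have "v = 0" by (metis inner_eq_zero_iff inner_ge_zero order_antisym)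
  then have eq: "(t \<bullet> t) *\<^sub>R s = (s \<bullet> t) *\<^sub>R t" unfolding v_def by simp
  have "s = (1/(t \<bullet> t)) *\<^sub>R ((t \<bullet> t) *\<^sub>R s)" using \<open>t \<noteq> 0\<close> by simp
  also have "\<dots> = (1/(t \<bullet> t)) *\<^sub>R ((s \<bullet> t) *\<^sub>R t)" using eq by simp
  finally have "s = (1/(t \<bullet> t)) *\<^sub>R ((s \<bullet> t) *\<^sub>R t)" .
  moreover have "(1/(t \<bullet> t)) *\<^sub>R ((s \<bullet> t) *\<^sub>R t) \<in> span {t}"
    by (intro span_scale span_base) simp
  ultimately have "s \<in> span {t}" by simp
  moreover have "s \<notin> span {t}" using assms(1,2) by (simp add: independent_insert)
  ultimately show False by simp
qed

lemma rank2:
  fixes D :: "'a::euclidean_space set"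
  assumes D: "simple_system D" and sD: "s \<in> D" and tD: "t \<in> D" and st: "s \<noteq> t"
    and x: "x \<in> weyl {s,t}" and len: "wlen {s,t} x \<le> wlen {s,t} (x \<circ> refl s)"
  shows "\<exists>\<alpha> \<beta>. 0 \<le> \<alpha> \<and> 0 \<le> \<beta> \<and> x s = \<alpha> *\<^sub>R s + \<beta> *\<^sub>R t"
proof -
  have s0: "s \<noteq> 0" and t0: "t \<noteq> 0" using simple_system_nz[OF D] sD tD by auto
  define A where "A = 2*(s\<bullet>t)/(s\<bullet>s)"
  define B where "B = 2*(s\<bullet>t)/(t\<bullet>t)"
  have ss: "s \<bullet> s > 0" "t \<bullet> t > 0" using s0 t0 by auto
  have "\<forall>a\<in>D. \<forall>b\<in>D. 2 * (b \<bullet> a) / (a \<bullet> a) \<in> \<int>" using D by (simp add: simple_system_def)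
  then have "2*(t\<bullet>s)/(s\<bullet>s) \<in> \<int>" "2*(s\<bullet>t)/(t\<bullet>t) \<in> \<int>" using sD tD by auto
  then have AZ: "A \<in> \<int>" "B \<in> \<int>" unfolding A_def B_def by (auto simp: inner_commute[of t s])
  have le: "s \<bullet> t \<le> 0" using D sD tD st unfolding simple_system_def by auto
  have A0: "A \<le> 0" "B \<le> 0" using le ss unfolding A_def B_def by (auto simp: divide_nonpos_pos)
  have ind: "independent {s,t}" using D sD tD unfolding simple_system_def
    by (meson independent_mono empty_subsetI insert_subset)
  have cs: "(s \<bullet> t)^2 < (s \<bullet> s) * (t \<bullet> t)" by (rule strict_cs[OF ind st t0])
  have "A * B = 4 * (s \<bullet> t)^2 / ((s \<bullet> s) * (t \<bullet> t))"
    unfolding A_def B_def by (simp add: power2_eq_square field_simps)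
  also have "\<dots> < 4" using cs ss by (simp add: field_simps)
  finally have AB: "A * B < 4" .
  have AB0: "A = 0 \<longleftrightarrow> B = 0" using ss unfolding A_def B_def by auto
  obtain m where m: "goodm s t A B m" using rank2_cases[OF st AZ A0 AB AB0] by blast
  have wp: "wordmap u y = y + fst (phi s A B (2*(s\<bullet>y)/(s\<bullet>s)) (2*(t\<bullet>y)/(t\<bullet>t)) u) *\<^sub>R s
            + snd (phi s A B (2*(s\<bullet>y)/(s\<bullet>s)) (2*(t\<bullet>y)/(t\<bullet>t)) u) *\<^sub>R t" if "set u \<subseteq> {s,t}" for u y
    using wordmap_phi[OF s0 t0 that] unfolding A_def B_def .
  have sa: "set (alt t s m) \<subseteq> {s,t}" using set_alt[of t s m] by auto
  have braid: "wordmap (alt s t m) = wordmap (alt t s m)"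
  proof
    fix y
    show "wordmap (alt s t m) y = wordmap (alt t s m) y"
      using wp[OF set_alt[of s t m], of y] wp[OF sa, of y] m
      unfolding goodm_def by auto
  qed
  obtain u where u: "set u \<subseteq> {s,t}" "length u = wlen {s,t} x" "wordmap u = x"
    using wlen_ex[OF x] by blast
  have nd: "\<forall>p c q. u \<noteq> p @ c # c # q"
  proof (intro allI notI)
    fix p c q assume h: "u = p @ c # c # q"
    then have c0: "c \<noteq> 0" using u(1) s0 t0 by auto
    have "wordmap u = wordmap (p @ q)"
      using h by (simp add: wordmap_append fun_eq_iff refl_refl[OF c0])
    then have "wlen {s,t} x \<le> length (p @ q)" using wlen_le[of "p @ q" "{s,t}"] u h by auto
    then show False using u(2) h by simp
  qed
  have lst: "u = [] \<or> last u = t"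
  proof (rule ccontr)
    assume "\<not> ?thesis"
    then have "u \<noteq> []" "last u = s" using u(1) last_in_set by fastforce+
    then obtain q where q: "u = q @ [s]" by (metis append_butlast_last_id)
    have "x \<circ> refl s = wordmap q" using q u(3)[symmetric] by (simp add: wordmap_append fun_eq_iff refl_refl[OF s0])
    then have "wlen {s,t} (x \<circ> refl s) \<le> length q" using wlen_le[of q "{s,t}"] u(1) q by auto
    then show False using len u(2) q by simp
  qed
  define n where "n = length u"
  have ualt: "u = alt s t n" unfolding n_def by (rule alt_char[OF u(1) st nd lst])
  show ?thesis
  proof (cases "n < m")
    case True
    then have h: "0 \<le> 1 + fst (phi s A B 2 B (alt s t n)) \<and> 0 \<le> snd (phi s A B 2 B (alt s t n))"
      using m unfolding goodm_def by blast
    then have h: "0 \<le> 1 + fst (phi s A B 2 B u) \<and> 0 \<le> snd (phi s A B 2 B u)" using ualt by simp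
    have "x s = s + fst (phi s A B 2 B u) *\<^sub>R s + snd (phi s A B 2 B u) *\<^sub>R t"
      using wp[OF u(1), of s] u(3) ss unfolding B_def by (simp add: inner_commute[of t s])
    also have "\<dots> = (1 + fst (phi s A B 2 B u)) *\<^sub>R s + snd (phi s A B 2 B u) *\<^sub>R t"
      by (simp add: algebra_simps)
    finally show ?thesis using h by blast
  next
    case False
    then obtain j where j: "n = j + m" by (metis add.commute le_add_diff_inverse not_less)
    obtain p where p: "alt s t (j + m) = p @ alt s t m" using alt_suffix[of s t j m] by blast
    have "m > 0" using m unfolding goodm_def by simp
    then obtain m' where m': "m = Suc m'" by (cases m) auto
    obtain q where q: "alt t s m = q @ [s]" using alt_last[of t s m'] m' by blast
    have "x = wordmap (p @ alt t s m)"
      using u(3) ualt j p braid by (simp add: wordmap_append)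
    then have "x \<circ> refl s = wordmap (p @ q)"
      using q by (simp add: wordmap_append fun_eq_iff refl_refl[OF s0])
    moreover have "set (p @ q) \<subseteq> {s,t}"
    proof -
      have "set (p @ alt s t m) \<subseteq> {s,t}" using set_alt[of s t "j+m"] p by simp
      moreover have "set (q @ [s]) \<subseteq> {s,t}" using set_alt[of t s m] q by auto
      ultimately show ?thesis by auto
    qed
    ultimately have "wlen {s,t} (x \<circ> refl s) \<le> length (p @ q)" using wlen_le[of "p @ q" "{s,t}"] by simp
    moreover have "length (p @ q) < length u"
      using j p q m' length_alt[of t s m] length_alt[of s t "j+m"] length_alt[of s t m] ualt by simp
    ultimately show ?thesis using len u(2) by simp
  qed
qed


definition pos :: "'a::euclidean_space set \<Rightarrow> 'a \<Rightarrow> bool" where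
  "pos D v \<longleftrightarrow> (\<exists>c. (\<forall>d\<in>D. 0 \<le> c d) \<and> v = (\<Sum>d\<in>D. c d *\<^sub>R d))"

lemma pos_add: "pos D u \<Longrightarrow> pos D v \<Longrightarrow> pos D (u + v)"
  unfolding pos_def
proof (elim exE conjE)
  fix c1 c2 assume "\<forall>d\<in>D. 0 \<le> c1 d" "u = (\<Sum>d\<in>D. c1 d *\<^sub>R d)" "\<forall>d\<in>D. 0 \<le> c2 d" "v = (\<Sum>d\<in>D. c2 d *\<^sub>R d)"
  then show "\<exists>c. (\<forall>d\<in>D. 0 \<le> c d) \<and> u + v = (\<Sum>d\<in>D. c d *\<^sub>R d)"
    by (intro exI[of _ "\<lambda>d. c1 d + c2 d"]) (auto simp: scaleR_add_left sum.distrib)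
qed

lemma pos_scale: "0 \<le> \<alpha> \<Longrightarrow> pos D u \<Longrightarrow> pos D (\<alpha> *\<^sub>R u)"
  unfolding pos_def
proof (elim exE conjE)
  fix c assume "0 \<le> \<alpha>" "\<forall>d\<in>D. 0 \<le> c d" "u = (\<Sum>d\<in>D. c d *\<^sub>R d)"
  then show "\<exists>c. (\<forall>d\<in>D. 0 \<le> c d) \<and> \<alpha> *\<^sub>R u = (\<Sum>d\<in>D. c d *\<^sub>R d)"
    by (intro exI[of _ "\<lambda>d. \<alpha> * c d"]) (auto simp: scaleR_sum_right)
qed

lemma pos_simple: "finite D \<Longrightarrow> s \<in> D \<Longrightarrow> pos D s"
  unfolding pos_def
proof (intro exI[of _ "\<lambda>d. if d = s then 1 else 0"] conjI)
  assume "finite D" "s \<in> D"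
  have "(\<Sum>d\<in>D. (if d = s then 1 else 0) *\<^sub>R d) = (\<Sum>d\<in>D. if d = s then d else 0)"
    by (intro sum.cong) auto
  also have "\<dots> = s" using \<open>finite D\<close> \<open>s \<in> D\<close> by (simp add: sum.delta')
  finally show "s = (\<Sum>d\<in>D. (if d = s then 1 else 0) *\<^sub>R d)" by simp
qed auto

theorem pos_root:
  fixes D :: "'a::euclidean_space set"
  assumes D: "simple_system D"
  shows "w \<in> weyl D \<Longrightarrow> s \<in> D \<Longrightarrow> wlen D w \<le> wlen D (w \<circ> refl s) \<Longrightarrow> pos D (w s)"
proof (induction "wlen D w" arbitrary: w s rule: less_induct)
  case less
  have fin: "finite D" using D by (simp add: simple_system_def)
  have nz: "\<And>d. d \<in> D \<Longrightarrow> d \<noteq> 0" using simple_system_nz[OF D] by blast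
  define n where "n = wlen D w"
  show ?case
  proof (cases "n = 0")
    case True
    then have "w = id" using wlen0[OF less.prems(1)] n_def by simp
    then show ?thesis using pos_simple[OF fin less.prems(2)] by simp
  next
    case False
    obtain as where as: "set as \<subseteq> D" "length as = n" "wordmap as = w"
      using wlen_ex[OF less.prems(1)] n_def by blast
    then have "as \<noteq> []" using False by auto
    then obtain bs s' where bs: "as = bs @ [s']" by (metis rev_exhaust)
    have s'D: "s' \<in> D" using as bs by auto
    have s'0: "s' \<noteq> 0" using nz s'D by blast
    have ws': "w \<circ> refl s' = wordmap bs" using as(3)[symmetric] bs
      by (simp add: wordmap_append fun_eq_iff refl_refl[OF s'0])
    have wws': "w = (w \<circ> refl s') \<circ> refl s'" by (simp add: fun_eq_iff refl_refl[OF s'0])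
    have l1: "wlen D (w \<circ> refl s') \<le> n - 1" using wlen_le[of bs D] ws' as bs by simp
    have ws'W: "w \<circ> refl s' \<in> weyl D" using ws' as bs weyl_word[of bs D] by simp
    have l2: "n \<le> wlen D (w \<circ> refl s') + 1"
    proof -
      have "n \<le> wlen D (w \<circ> refl s') + wlen D (refl s')"
        using wlen_comp[OF ws'W refl_weyl[OF s'D] subset_refl] wws' n_def by simp
      moreover have "wlen D (refl s') \<le> 1" using wlen_le[of "[s']" D] s'D by simp
      ultimately show ?thesis by simp
    qed
    have ss': "s \<noteq> s'"
    proof
      assume "s = s'"
      then show False using less.prems(3) l1 False n_def by simp
    qed
    define I where "I = {s, s'}"
    have ID: "I \<subseteq> D" using less.prems(2) s'D I_def by auto
    define Ap where "Ap v \<longleftrightarrow> v \<in> weyl D \<and> (\<exists>x\<in>weyl I. w = v \<circ> x \<and> n = wlen D v + wlen I x)" for v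
    have lenI1: "wlen I (refl s') = 1"
    proof -
      have "wlen I (refl s') \<le> 1" using wlen_le[of "[s']" I] I_def by simp
      moreover have "wlen I (refl s') \<noteq> 0"
      proof
        assume "wlen I (refl s') = 0"
        then have "refl s' = id" using wlen0[OF refl_weyl[of s' I]] I_def by simp
        then have "refl s' s' = s'" by simp
        then have "- s' = s'" using refl_self[OF s'0] by simp
        then have "s' + s' = 0" by (metis add.right_inverse)
        then have "(2::real) *\<^sub>R s' = 0" by (simp add: scaleR_2)
        then show False using s'0 by simp
      qed
      ultimately show ?thesis by simp
    qed
    have "Ap (w \<circ> refl s')"
      unfolding Ap_def using ws'W refl_weyl[of s' I] I_def wws' lenI1 l1 l2 False by auto
    then obtain v where Av: "Ap v" and vmin: "\<And>v'. Ap v' \<Longrightarrow> wlen D v \<le> wlen D v'"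
      using ex_has_least_nat[where P=Ap and k="w \<circ> refl s'" and m="wlen D"] by blast
    have vlt: "wlen D v < wlen D w" using vmin[OF \<open>Ap (w \<circ> refl s')\<close>] l1 False n_def by simp
    obtain x where x: "x \<in> weyl I" "w = v \<circ> x" "n = wlen D v + wlen I x" and vW: "v \<in> weyl D"
      using Av unfolding Ap_def by blast
    have vr: "wlen D v \<le> wlen D (v \<circ> refl r)" if rI: "r \<in> I" for r
    proof (rule ccontr)
      assume "\<not> ?thesis"
      then have lt: "wlen D (v \<circ> refl r) < wlen D v" by simp
      have rD: "r \<in> D" using rI ID by auto
      have r0: "r \<noteq> 0" using nz rD by blast
      have vrW: "v \<circ> refl r \<in> weyl D" using weyl_comp[OF vW refl_weyl[OF rD]] by simp
      have xW: "refl r \<circ> x \<in> weyl I" using weyl_comp[OF refl_weyl[OF rI] x(1)] by simp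
      have weq: "w = (v \<circ> refl r) \<circ> (refl r \<circ> x)" using x(2) by (simp add: fun_eq_iff refl_refl[OF r0])
      have "wlen I (refl r \<circ> x) \<le> wlen I (refl r) + wlen I x" using wlen_comp[OF refl_weyl[OF rI] x(1)] by simp
      moreover have "wlen I (refl r) \<le> 1" using wlen_le[of "[r]" I] rI by simp
      moreover have "n \<le> wlen D (v \<circ> refl r) + wlen I (refl r \<circ> x)"
        using wlen_comp[OF vrW xW ID] weq n_def by simp
      ultimately have "n = wlen D (v \<circ> refl r) + wlen I (refl r \<circ> x)" using lt x(3) by linarith
      then have "Ap (v \<circ> refl r)" unfolding Ap_def using vrW xW weq by blast
      then have "wlen D v \<le> wlen D (v \<circ> refl r)" by (rule vmin)
      then show False using lt by simp
    qed
    have "s \<in> I" "s' \<in> I" unfolding I_def by auto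
    then have pvs: "pos D (v s)" and pvs': "pos D (v s')"
      using less.hyps[OF vlt vW less.prems(2) vr] less.hyps[OF vlt vW s'D vr] by auto
    have xs: "wlen I x \<le> wlen I (x \<circ> refl s)"
    proof (rule ccontr)
      assume "\<not> ?thesis"
      moreover have "wlen D (w \<circ> refl s) \<le> wlen D v + wlen I (x \<circ> refl s)"
        using wlen_comp[OF vW weyl_comp[OF x(1) refl_weyl[of s I]] ID] x(2) I_def by (simp add: comp_assoc)
      ultimately show False using less.prems(3) x(3) n_def by simp
    qed
    obtain \<alpha> \<beta> where ab: "0 \<le> \<alpha>" "0 \<le> \<beta>" "x s = \<alpha> *\<^sub>R s + \<beta> *\<^sub>R s'"
      using rank2[OF D less.prems(2) s'D ss' x(1)[unfolded I_def] xs[unfolded I_def]] by blast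
    have lin: "linear v" using weyl_linear[OF vW] .
    have "w s = \<alpha> *\<^sub>R v s + \<beta> *\<^sub>R v s'"
      using x(2) ab(3) by (simp add: linear_add[OF lin] linear_scale[OF lin])
    moreover have "pos D (\<alpha> *\<^sub>R v s + \<beta> *\<^sub>R v s')"
      by (intro pos_add pos_scale ab pvs pvs')
    ultimately show ?thesis by simp
  qed
qed

lemma coweight_prop:
  fixes D :: "'a::euclidean_space set"
  assumes D: "simple_system D" and aD: "a \<in> D"
  shows "\<forall>b\<in>D. b \<bullet> coweight D a = (if b = a then 1 else 0)"
proof -
  have ind: "independent D" and sp: "span D = UNIV" using D unfolding simple_system_def by blast+
  obtain g :: "'a \<Rightarrow> real" where g: "linear g" "\<forall>x\<in>D. g x = (if x = a then 1 else 0)"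
    using real_vector.linear_independent_extend[OF ind, where f="\<lambda>x. if x = a then 1 else 0"] by blast
  define v where "v = (\<Sum>i\<in>Basis. g i *\<^sub>R i)"
  have gv: "b \<bullet> v = g b" for b
  proof -
    have "g b = g (\<Sum>i\<in>Basis. (b \<bullet> i) *\<^sub>R i)" by (simp add: euclidean_representation)
    also have "\<dots> = (\<Sum>i\<in>Basis. (b \<bullet> i) * g i)" by (simp add: linear_sum[OF g(1)] linear_scale[OF g(1)])
    also have "\<dots> = b \<bullet> v" unfolding v_def by (simp add: inner_sum_right mult.commute)
    finally show ?thesis by simp
  qed
  have ex: "\<forall>b\<in>D. b \<bullet> v = (if b = a then 1 else 0)" using gv g(2) by simp
  have uniq: "v' = v" if "\<forall>b\<in>D. b \<bullet> v' = (if b = a then 1 else 0)" for v'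
  proof -
    have "\<forall>b\<in>D. orthogonal (v' - v) b"
    proof
      fix b assume "b \<in> D"
      have "(v' - v) \<bullet> b = b \<bullet> v' - b \<bullet> v" by (simp add: inner_diff_left inner_diff_right inner_commute[of _ b])
      then show "orthogonal (v' - v) b" using that ex \<open>b \<in> D\<close> by (simp add: orthogonal_def)
    qed
    then have "orthogonal (v' - v) (v' - v)" using orthogonal_to_span[of "v' - v" D "v' - v"] sp by auto
    then show ?thesis by (simp add: orthogonal_def)
  qed
  have "coweight D a = v" unfolding coweight_def
  proof (rule the_equality)
    show "\<forall>b\<in>D. b \<bullet> v = (if b = a then 1 else 0)" by (rule ex)
  next
    fix v' assume "\<forall>b\<in>D. b \<bullet> v' = (if b = a then 1 else 0)"
    then show "v' = v" by (rule uniq)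
  qed
  then show ?thesis using ex by simp
qed

lemma rho_simple: "simple_system D \<Longrightarrow> a \<in> D \<Longrightarrow> a \<bullet> rho_vee D = 1"
proof -
  assume D: "simple_system D" and aD: "a \<in> D"
  have fin: "finite D" using D by (simp add: simple_system_def)
  have "a \<bullet> rho_vee D = (\<Sum>b\<in>D. a \<bullet> coweight D b)" unfolding rho_vee_def by (simp add: inner_sum_right)
  also have "\<dots> = (\<Sum>b\<in>D. if b = a then 1 else 0)"
  proof (rule sum.cong)
    fix b assume "b \<in> D"
    from bspec[OF coweight_prop[OF D this] aD] show "a \<bullet> coweight D b = (if b = a then 1 else 0)" by auto
  qed simp
  also have "\<dots> = 1" using fin aD by (simp add: sum.delta')
  finally show ?thesis .
qed

lemma pos_rho: "simple_system D \<Longrightarrow> pos D v \<Longrightarrow> v \<noteq> 0 \<Longrightarrow> v \<bullet> rho_vee D > 0"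
proof -
  assume D: "simple_system D" and p: "pos D v" and v0: "v \<noteq> 0"
  have fin: "finite D" using D by (simp add: simple_system_def)
  obtain c where c: "\<forall>d\<in>D. 0 \<le> c d" "v = (\<Sum>d\<in>D. c d *\<^sub>R d)" using p unfolding pos_def by blast
  obtain d where d: "d \<in> D" "c d \<noteq> 0"
  proof (rule ccontr)
    assume "\<not> thesis"
    then have "\<forall>d\<in>D. c d = 0" using that by blast
    then show False using c(2) v0 by simp
  qed
  have "v \<bullet> rho_vee D = (\<Sum>e\<in>D. c e * (e \<bullet> rho_vee D))" using c(2) by (simp add: inner_sum_left)
  also have "\<dots> = (\<Sum>e\<in>D. c e)" using rho_simple[OF D] by (intro sum.cong) auto
  also have "\<dots> > 0" using d c(1) fin by (intro sum_pos2[of D d]) auto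
  finally show ?thesis .
qed


lemma bij_refl: "a \<noteq> 0 \<Longrightarrow> bij (refl a)"
  by (rule bij_betw_byWitness[where f'="refl a"]) (auto simp: refl_refl)

lemma inv_refl: "a \<noteq> 0 \<Longrightarrow> inv (refl a) = refl a"
  by (rule inv_equality) (auto simp: refl_refl)

lemma alg_summary:
  fixes D :: "'a::euclidean_space set"
  assumes D: "simple_system D" and w: "w \<in> weyl D" and aD: "a \<in> D"
    and len: "wlen D (w \<circ> refl a) = wlen D w + 1"
  shows "a \<bullet> rho_vee D = 1" "a \<bullet> coroot a = 2" "a \<bullet> inv w (rho_vee D) > 0"
    "inv (w \<circ> refl a) (rho_vee D) = refl a (inv w (rho_vee D))"
proof -
  have a0: "a \<noteq> 0" using simple_system_nz[OF D] aD by blast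
  show "a \<bullet> rho_vee D = 1" by (rule rho_simple[OF D aD])
  show "a \<bullet> coroot a = 2" by (rule inner_coroot[OF a0])
  obtain as where as: "set as \<subseteq> D" "wordmap as = w" using w unfolding weyl_def by blast
  have nz: "0 \<notin> set as" using as(1) simple_system_nz[OF D] by blast
  have p: "pos D (w a)" using pos_root[OF D w aD] len by simp
  have wa0: "w a \<noteq> 0"
  proof
    assume "w a = 0"
    then have "a \<bullet> a = 0" using wordmap_inner[OF nz, of a a] as(2) by simp
    then show False using a0 by simp
  qed
  have invw: "inv w = wordmap (rev as)" using wordmap_inv[OF nz] as(2) by simp
  have "a \<bullet> inv w (rho_vee D) = w a \<bullet> w (inv w (rho_vee D))"
    using wordmap_inner[OF nz, of a "inv w (rho_vee D)"] as(2) by simp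
  also have "\<dots> = w a \<bullet> rho_vee D" using invw wordmap_inv_rev[OF nz] as(2) by simp
  also have "\<dots> > 0" by (rule pos_rho[OF D p wa0])
  finally show "a \<bullet> inv w (rho_vee D) > 0" .
  have "inv (w \<circ> refl a) = inv (refl a) \<circ> inv w"
    by (rule o_inv_distrib) (use wordmap_bij[OF nz] as(2) bij_refl[OF a0] in auto)
  then show "inv (w \<circ> refl a) (rho_vee D) = refl a (inv w (rho_vee D))"
    using inv_refl[OF a0] by simp
qed


lemma cont_on_lt:
  fixes f :: "real \<Rightarrow> 'b::topological_space"
  assumes "\<And>b. 0 \<le> b \<Longrightarrow> b < T \<Longrightarrow> continuous_on {0..b} f"
  shows "continuous_on {0..<T} f"
  unfolding continuous_on_eq_continuous_within
proof
  fix t assume t: "t \<in> {0..<T}"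
  define b where "b = (t+T)/2"
  have b: "0 \<le> b" "b < T" "t < b" using t unfolding b_def by auto
  have "continuous (at t within {0..b}) f"
    using assms[OF b(1,2)] t b unfolding continuous_on_eq_continuous_within by auto
  moreover have "at t within {0..<T} = at t within {0..b}"
    by (rule at_within_nhd[of t "{..<b}"]) (use b in auto)
  ultimately show "continuous (at t within {0..<T}) f" by simp
qed

lemma int_cont_lt:
  fixes f :: "real \<Rightarrow> real"
  assumes "continuous_on {0..<T} f"
  shows "continuous_on {0..<T} (\<lambda>t. integral {0..t} f)"
proof (rule cont_on_lt)
  fix b assume "0 \<le> b" "b < T"
  then have "continuous_on {0..b} f" using assms by (rule_tac continuous_on_subset) auto
  then show "continuous_on {0..b} (\<lambda>t. integral {0..t} f)"
    by (intro indefinite_integral_continuous_1 integrable_continuous_interval)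
qed

lemma deriv_int_lt:
  fixes f :: "real \<Rightarrow> real"
  assumes "continuous_on {0..<T} f" "0 < t" "t < T"
  shows "((\<lambda>t. integral {0..t} f) has_real_derivative f t) (at t)"
proof -
  define b where "b = (t+T)/2"
  have b: "0 \<le> b" "b < T" "t < b" using assms unfolding b_def by auto
  have "continuous_on {0..b} f" using assms b by (rule_tac continuous_on_subset) auto
  then have "((\<lambda>t. integral {0..t} f) has_real_derivative f t) (at t within {0..b})"
    by (rule integral_has_real_derivative) (use assms b in auto)
  moreover have "at t within {0..b} = at t"
    by (rule at_within_interior) (use assms b in auto)
  ultimately show ?thesis by simp
qed

lemma L_int:
  fixes f :: "real \<Rightarrow> real"
  assumes T: "0 < T" and c: "continuous_on {0..<T} f" and nn: "\<And>t. 0 \<le> t \<Longrightarrow> t < T \<Longrightarrow> 0 \<le> f t"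
    and bd: "\<And>t. 0 \<le> t \<Longrightarrow> t < T \<Longrightarrow> integral {0..t} f \<le> M"
  shows "f integrable_on {0..T}"
proof -
  define tn where "tn n = T - T / real (Suc n)" for n
  define fn where "fn n x = (if x \<in> {0..tn n} then f x else 0)" for n x
  define g where "g x = (if x < T then f x else 0)" for x
  have tn: "0 \<le> tn n" "tn n < T" for n
    using T unfolding tn_def by (auto simp: field_simps)
  have tnm: "tn n \<le> tn (Suc n)" for n
    using T unfolding tn_def by (auto simp: field_simps)
  have intf: "f integrable_on {0..tn n}" for n
  proof (rule integrable_continuous_interval, rule continuous_on_subset[OF c])
    show "{0..tn n} \<subseteq> {0..<T}" using tn[of n] by auto
  qed
  have sub: "{0..tn n} \<inter> {0..T} = {0..tn n}" for n using tn[of n] by auto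
  have ifn: "(fn n) integrable_on {0..T}" for n
    unfolding fn_def integrable_restrict_Int sub by (rule intf)
  have vfn: "integral {0..T} (fn n) = integral {0..tn n} f" for n
    unfolding fn_def integral_restrict_Int sub ..
  have mono: "fn n x \<le> fn (Suc n) x" if "x \<in> {0..T}" for n x
    using tnm[of n] nn[of x] that tn[of n] tn[of "Suc n"] unfolding fn_def by auto
  have lim: "(\<lambda>n. fn n x) \<longlonglongrightarrow> g x" if x: "x \<in> {0..T}" for x
  proof (cases "x < T")
    case True
    obtain N where N: "T / (T - x) \<le> real N" using real_arch_simple by blast
    have "\<forall>n\<ge>N. fn n x = g x"
    proof (intro allI impI)
      fix n assume "N \<le> n"
      then have "T / (T - x) \<le> real (Suc n)" using N by simp
      then have "T \<le> real (Suc n) * (T - x)" using True by (simp add: field_simps)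
      then have "T / real (Suc n) \<le> T - x" by (simp add: field_simps)
      then have "x \<le> tn n" unfolding tn_def by simp
      then show "fn n x = g x" using x True unfolding fn_def g_def by auto
    qed
    then show ?thesis by (intro tendsto_eventually) (auto simp: eventually_sequentially)
  next
    case False
    then have "fn n x = g x" for n using tn[of n] x unfolding fn_def g_def by auto
    then show ?thesis by simp
  qed
  have bnd: "bounded (range (\<lambda>n. integral {0..T} (fn n)))"
    unfolding bounded_real
  proof (intro exI ballI)
    fix y assume "y \<in> range (\<lambda>n. integral {0..T} (fn n))"
    then obtain n where y: "y = integral {0..tn n} f" using vfn by auto
    have "0 \<le> y" unfolding y
    proof (rule integral_nonneg[OF intf])
      fix x assume "x \<in> {0..tn n}"
      then show "0 \<le> f x" using nn[of x] tn[of n] by auto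
    qed
    moreover have "y \<le> M" unfolding y using bd tn by auto
    ultimately show "\<bar>y\<bar> \<le> M" by simp
  qed
  have "g integrable_on {0..T}"
    using monotone_convergence_increasing[OF ifn mono lim bnd] by blast
  then show ?thesis
    by (rule integrable_spike[where S="{T}"]) (auto simp: g_def)
qed


lemma ev_lt: "0 < T \<Longrightarrow> eventually (\<lambda>t. 0 < t \<and> t < (T::real)) (at_left T)"
  using eventually_at_left_real[of 0 T] by (auto elim: eventually_mono)

lemma tendsto_Tminus: "((\<lambda>t. T - t) \<longlongrightarrow> 0) (at_left (T::real))"
  using tendsto_diff[OF tendsto_const tendsto_ident_at, of T T "{..<T}"] by simp

lemma tendsto_Tpowr: "0 < k \<Longrightarrow> ((\<lambda>t. (T - t) powr k) \<longlongrightarrow> 0) (at_left (T::real))"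
proof (rule tendsto_zero_powrI[OF tendsto_Tminus tendsto_const])
  show "\<forall>\<^sub>F x in at_left T. 0 \<le> T - x" by (auto simp: eventually_at_left_field intro: exI[of _ "T - 1"])
qed

lemma deriv_Tpowr: "t < T \<Longrightarrow> ((\<lambda>x. (T - x) powr r) has_real_derivative r * (T - t) powr (r - 1) * (- 1)) (at t)"
  using DERIV_fun_powr[of "\<lambda>x. T - x" "-1" t r] by (auto intro!: derivative_eq_intros)

lemma L_tail:
  fixes g :: "real \<Rightarrow> real"
  assumes T: "0 < T" and k: "0 < k" and K: "0 < K" and c: "continuous_on {0..<T} g"
    and pos: "\<And>s. 0 \<le> s \<Longrightarrow> s < T \<Longrightarrow> 0 < g s"
    and lim: "((\<lambda>s. g s / (T - s) powr (k - 1)) \<longlongrightarrow> K) (at_left T)"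
  shows "g integrable_on {0..T}"
    "((\<lambda>t. (integral {0..T} g - integral {0..t} g) / (T - t) powr k) \<longlongrightarrow> K / k) (at_left T)"
proof -
  have "eventually (\<lambda>s. g s / (T - s) powr (k - 1) < 2 * K) (at_left T)"
    using order_tendstoD(2)[OF lim, of "2*K"] K by simp
  then obtain b where b: "b < T" "\<And>s. b < s \<Longrightarrow> s < T \<Longrightarrow> g s / (T - s) powr (k - 1) < 2 * K"
    unfolding eventually_at_left_field by blast
  define t1 where "t1 = max 0 ((b + T) / 2)"
  have "b < (b + T) / 2" "(b + T) / 2 < T" using b(1) by simp_all
  then have t1: "0 \<le> t1" "t1 < T" "b < t1" using b T unfolding t1_def by (auto simp: less_max_iff_disj)
  have gb: "g s \<le> 2 * K * (T - s) powr (k - 1)" if "t1 \<le> s" "s < T" for s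
  proof -
    have "(T - s) powr (k - 1) > 0" using that by simp
    then show ?thesis using b(2)[of s] that t1 by (simp add: divide_less_eq)
  qed
  define H where "H s = - (2 * K / k) * (T - s) powr k" for s
  have dH: "(H has_real_derivative 2 * K * (T - s) powr (k - 1)) (at s)" if "s < T" for s
  proof -
    have "(H has_real_derivative - (2 * K / k) * (k * (T - s) powr (k - 1) * (- 1))) (at s)"
      unfolding H_def by (intro DERIV_cmult deriv_Tpowr that)
    then show ?thesis using k by (simp add: mult.assoc)
  qed
  have cg: "continuous_on {x..y} g" if "0 \<le> x" "y < T" for x y
    using c that by (rule_tac continuous_on_subset) auto
  have ig: "g integrable_on {x..y}" if "0 \<le> x" "y < T" for x y
    by (rule integrable_continuous_interval[OF cg[OF that]])
  have bd: "integral {0..t} g \<le> integral {0..t1} g + (2 * K / k) * (T - t1) powr k" if t: "0 \<le> t" "t < T" for t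
  proof (cases "t \<le> t1")
    case True
    have "integral {0..t} g \<le> integral {0..t1} g"
      by (rule integral_subset_le) (use True t t1 ig pos in \<open>auto intro: less_imp_le\<close>)
    moreover have "0 \<le> (2 * K / k) * (T - t1) powr k" using K k by simp
    ultimately show ?thesis by linarith
  next
    case False
    have comb: "integral {0..t1} g + integral {t1..t} g = integral {0..t} g"
      by (rule Henstock_Kurzweil_Integration.integral_combine) (use False t t1 ig in auto)
    have hi: "((\<lambda>s. 2 * K * (T - s) powr (k - 1)) has_integral H t - H t1) {t1..t}"
    proof (rule fundamental_theorem_of_calculus)
      show "t1 \<le> t" using False by simp
      fix x assume "x \<in> {t1..t}"
      then have "x < T" using t by simp
      then show "(H has_vector_derivative 2 * K * (T - x) powr (k - 1)) (at x within {t1..t})"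
        using dH[of x] by (simp add: has_real_derivative_iff_has_vector_derivative[symmetric] has_field_derivative_at_within)
    qed
    have "integral {t1..t} g \<le> integral {t1..t} (\<lambda>s. 2 * K * (T - s) powr (k - 1))"
      by (rule integral_le[OF ig]) (use t t1 hi gb in \<open>auto simp: has_integral_integrable\<close>)
    also have "\<dots> = H t - H t1" using hi by (rule integral_unique)
    also have "\<dots> \<le> (2 * K / k) * (T - t1) powr k" unfolding H_def using K k by simp
    finally show ?thesis using comb by linarith
  qed
  show ig0: "g integrable_on {0..T}"
    by (rule L_int[OF T c _ bd]) (use pos in \<open>auto intro: less_imp_le\<close>)
  define I where "I = integral {0..T} g"
  have cF: "continuous_on {0..T} (\<lambda>t. integral {0..t} g)"
    by (rule indefinite_integral_continuous_1[OF ig0])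
  have "((\<lambda>t. integral {0..t} g) \<longlongrightarrow> I) (at T within {0..T})"
    using cF T unfolding continuous_on_def I_def by auto
  then have Flim: "((\<lambda>t. integral {0..t} g) \<longlongrightarrow> I) (at_left T)"
    using at_within_Icc_at_left[OF T] by simp
  have "((\<lambda>t. (I - integral {0..t} g) / (T - t) powr k) \<longlongrightarrow> K / k) (at_left T)"
  proof (rule lhopital_left[where f'="\<lambda>t. - g t" and g'="\<lambda>t. k * (T - t) powr (k - 1) * (- 1)"])
    show "((\<lambda>t. I - integral {0..t} g) \<longlongrightarrow> 0) (at_left T)"
      using tendsto_diff[OF tendsto_const Flim, of I] by simp
    show "((\<lambda>t. (T - t) powr k) \<longlongrightarrow> 0) (at_left T)" by (rule tendsto_Tpowr[OF k])
    show "\<forall>\<^sub>F t in at_left T. (T - t) powr k \<noteq> 0"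
      using ev_lt[OF T] by (auto elim: eventually_mono)
    show "\<forall>\<^sub>F t in at_left T. k * (T - t) powr (k - 1) * (- 1) \<noteq> 0"
      using ev_lt[OF T] k by (auto elim: eventually_mono)
    show "\<forall>\<^sub>F t in at_left T. ((\<lambda>t. I - integral {0..t} g) has_real_derivative - g t) (at t)"
      using ev_lt[OF T] by (auto elim!: eventually_mono intro!: derivative_eq_intros deriv_int_lt[OF c])
    show "\<forall>\<^sub>F t in at_left T. ((\<lambda>t. (T - t) powr k) has_real_derivative k * (T - t) powr (k - 1) * (- 1)) (at t)"
      by (rule eventually_mono[OF ev_lt[OF T]]) (rule deriv_Tpowr, simp)
    have "((\<lambda>t. (g t / (T - t) powr (k - 1)) / k) \<longlongrightarrow> K / k) (at_left T)"
      by (intro tendsto_divide lim tendsto_const) (use k in simp)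
    then show "((\<lambda>t. - g t / (k * (T - t) powr (k - 1) * (- 1))) \<longlongrightarrow> K / k) (at_left T)"
      by (rule Lim_transform_eventually) (use ev_lt[OF T] in \<open>auto elim!: eventually_mono\<close>)
  qed
  then show "((\<lambda>t. (integral {0..T} g - integral {0..t} g) / (T - t) powr k) \<longlongrightarrow> K / k) (at_left T)"
    unfolding I_def .
qed

lemma L_head:
  fixes h :: "real \<Rightarrow> real"
  assumes T: "0 < T" and k: "0 < k" and c: "continuous_on {0..<T} h"
    and lim: "((\<lambda>s. h s / (T - s) powr (- k - 1)) \<longlongrightarrow> K) (at_left T)"
  shows "((\<lambda>t. integral {0..t} h * (T - t) powr k) \<longlongrightarrow> K / k) (at_left T)"
proof -
  have "((\<lambda>t. integral {0..t} h / (T - t) powr (- k)) \<longlongrightarrow> K / k) (at_left T)"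
  proof (rule lhopital_left_at_top[where f'="\<lambda>t. h t" and g'="\<lambda>t. (- k) * (T - t) powr (- k - 1) * (- 1)"])
    have "LIM t at_left T. inverse ((T - t) powr k) :> at_top"
      by (rule filterlim_inverse_at_top[OF tendsto_Tpowr[OF k]]) (use ev_lt[OF T] in \<open>auto elim: eventually_mono\<close>)
    then show "LIM t at_left T. (T - t) powr (- k) :> at_top"
      by (subst filterlim_cong[OF refl refl]) (auto simp: powr_minus)
    show "\<forall>\<^sub>F t in at_left T. (- k) * (T - t) powr (- k - 1) * (- 1) \<noteq> 0"
      using ev_lt[OF T] k by (auto elim: eventually_mono)
    show "\<forall>\<^sub>F t in at_left T. ((\<lambda>t. integral {0..t} h) has_real_derivative h t) (at t)"
      using ev_lt[OF T] by (auto elim!: eventually_mono intro!: deriv_int_lt[OF c])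
    show "\<forall>\<^sub>F t in at_left T. ((\<lambda>t. (T - t) powr (- k)) has_real_derivative (- k) * (T - t) powr (- k - 1) * (- 1)) (at t)"
      by (rule eventually_mono[OF ev_lt[OF T]]) (rule deriv_Tpowr, simp)
    have "((\<lambda>t. (h t / (T - t) powr (- k - 1)) / k) \<longlongrightarrow> K / k) (at_left T)"
      by (intro tendsto_divide lim tendsto_const) (use k in simp)
    then show "((\<lambda>t. h t / ((- k) * (T - t) powr (- k - 1) * (- 1))) \<longlongrightarrow> K / k) (at_left T)"
      by (rule Lim_transform_eventually) (use ev_lt[OF T] in \<open>auto elim!: eventually_mono\<close>)
  qed
  then show ?thesis
    by (rule Lim_transform_eventually) (use ev_lt[OF T] in \<open>auto elim!: eventually_mono simp: powr_minus divide_inverse\<close>)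
qed


lemma ev_at_left_pick:
  assumes "eventually P (at_left (T::real))" "t < T"
  obtains t' where "t < t'" "t' < T" "P t'"
proof -
  obtain b where b: "b < T" "\<And>y. b < y \<Longrightarrow> y < T \<Longrightarrow> P y" using assms(1) unfolding eventually_at_left_field by blast
  define t' where "t' = (max b t + T) / 2"
  have "max b t < T" using b assms by simp
  then have "max b t < t'" "t' < T" unfolding t'_def by simp_all
  then show ?thesis using that b by auto
qed

lemma part1:
  fixes a coa v1 C :: "'a::euclidean_space" and p :: "real \<Rightarrow> 'a"
  assumes T: "0 < T" and k: "0 < k" and av1: "a \<bullet> v1 = 1 - k" and cont: "continuous_on {0..<T} p"
    and lim: "((\<lambda>t. p t - (C + ln (T - t) *\<^sub>R v1)) \<longlongrightarrow> 0) (at_left T)"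
  shows "(\<lambda>s. exp (- (a \<bullet> p s))) integrable_on {0..T}"
    "integral {0..T} (\<lambda>s. exp (- (a \<bullet> p s))) > 0"
    "\<forall>t\<in>{0..<T}. integral {0..t} (\<lambda>s. exp (- (a \<bullet> p s))) < integral {0..T} (\<lambda>s. exp (- (a \<bullet> p s)))"
    "\<exists>C'. ((\<lambda>t. (p t + ln (1 - integral {0..t} (\<lambda>s. exp (- (a \<bullet> p s))) / integral {0..T} (\<lambda>s. exp (- (a \<bullet> p s)))) *\<^sub>R coa)
            - (C' + ln (T - t) *\<^sub>R (v1 + k *\<^sub>R coa))) \<longlongrightarrow> 0) (at_left T)"
proof -
  define g where "g s = exp (- (a \<bullet> p s))" for s
  define r where "r t = p t - (C + ln (T - t) *\<^sub>R v1)" for t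
  define K where "K = exp (- (a \<bullet> C))"
  have K: "0 < K" unfolding K_def by simp
  have ar: "((\<lambda>t. a \<bullet> r t) \<longlongrightarrow> 0) (at_left T)"
    using tendsto_inner[OF tendsto_const lim, of a] unfolding r_def by simp
  have gform: "g s = K * (T - s) powr (k - 1) * exp (- (a \<bullet> r s))" if "s < T" for s
  proof -
    have "a \<bullet> p s = a \<bullet> C + ln (T - s) * (1 - k) + a \<bullet> r s"
      unfolding r_def by (simp add: inner_diff_right inner_add_right av1)
    then have "g s = exp (- (a \<bullet> C) + (k - 1) * ln (T - s) - a \<bullet> r s)" unfolding g_def
      by (simp add: algebra_simps)
    also have "\<dots> = K * exp ((k - 1) * ln (T - s)) * exp (- (a \<bullet> r s))"
      unfolding K_def by (simp add: exp_add exp_diff exp_minus field_simps)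
    also have "exp ((k - 1) * ln (T - s)) = (T - s) powr (k - 1)"
      using that by (simp add: powr_def)
    finally show ?thesis .
  qed
  have cg: "continuous_on {0..<T} g" unfolding g_def by (intro continuous_intros cont)
  have gpos: "0 < g s" for s unfolding g_def by simp
  have glim: "((\<lambda>s. g s / (T - s) powr (k - 1)) \<longlongrightarrow> K) (at_left T)"
  proof -
    have "((\<lambda>s. K * exp (- (a \<bullet> r s))) \<longlongrightarrow> K * exp (- 0)) (at_left T)"
      by (intro tendsto_intros ar)
    then have "((\<lambda>s. K * exp (- (a \<bullet> r s))) \<longlongrightarrow> K) (at_left T)" by simp
    moreover have "eventually (\<lambda>s. K * exp (- (a \<bullet> r s)) = g s / (T - s) powr (k - 1)) (at_left T)"
      using ev_lt[OF T] by eventually_elim (simp add: gform)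
    ultimately show ?thesis by (rule Lim_transform_eventually)
  qed
  note LT = L_tail[OF T k K cg _ glim]
  have ig: "g integrable_on {0..T}" using LT(1) gpos by blast
  define I where "I = integral {0..T} g"
  define F where "F t = integral {0..t} g" for t
  have Rlim: "((\<lambda>t. (I - F t) / (T - t) powr k) \<longlongrightarrow> K / k) (at_left T)"
    using LT(2) gpos unfolding I_def F_def by blast
  have evR: "eventually (\<lambda>t. I - F t > 0) (at_left T)"
  proof -
    have "eventually (\<lambda>t. (I - F t) / (T - t) powr k > 0) (at_left T)"
      using order_tendstoD(1)[OF Rlim, of 0] K k by simp
    then show ?thesis using ev_lt[OF T] by eventually_elim (auto simp: zero_less_divide_iff)
  qed
  have igs: "g integrable_on {x..y}" if "0 \<le> x" "y \<le> T" for x y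
    using integrable_subinterval_real[OF ig] that by auto
  have Fpos: "F t < I" if t: "0 \<le> t" "t < T" for t
  proof -
    obtain t' where t': "t < t'" "t' < T" "I - F t' > 0" using ev_at_left_pick[OF evR t(2)] by blast
    have "F t + integral {t..t'} g = F t'" unfolding F_def
      by (rule Henstock_Kurzweil_Integration.integral_combine) (use t t' igs in auto)
    moreover have "0 \<le> integral {t..t'} g"
      by (rule integral_nonneg) (use t t' igs gpos in \<open>auto intro: less_imp_le\<close>)
    ultimately show ?thesis using t' by linarith
  qed
  have F0: "F 0 = 0" unfolding F_def by simp
  have Ipos: "I > 0" using Fpos[of 0] T F0 by simp
  show "g integrable_on {0..T}" by (rule ig)
  show "I > 0" by (rule Ipos)
  show "\<forall>t\<in>{0..<T}. F t < I" using Fpos by auto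
  define C' where "C' = C + ln (K / (k * I)) *\<^sub>R coa"
  have L1: "((\<lambda>t. ln ((I - F t) / (T - t) powr k) - ln (K / k)) \<longlongrightarrow> ln (K / k) - ln (K / k)) (at_left T)"
    by (intro tendsto_intros Rlim) (use K k in simp)
  have L2: "((\<lambda>t. r t + (ln ((I - F t) / (T - t) powr k) - ln (K / k)) *\<^sub>R coa) \<longlongrightarrow> 0 + 0 *\<^sub>R coa) (at_left T)"
    by (intro tendsto_intros L1[simplified] lim[folded r_def])
  have "eventually (\<lambda>t. r t + (ln ((I - F t) / (T - t) powr k) - ln (K / k)) *\<^sub>R coa =
      (p t + ln (1 - F t / I) *\<^sub>R coa) - (C' + ln (T - t) *\<^sub>R (v1 + k *\<^sub>R coa))) (at_left T)"
    using ev_lt[OF T] evR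
  proof eventually_elim
    case (elim t)
    then have Tt: "T - t > 0" and R: "I - F t > 0" by auto
    have e1: "1 - F t / I = (I - F t) / I" using Ipos by (simp add: field_simps)
    have e2: "ln ((I - F t) / (T - t) powr k) - ln (K / k) = ln ((I - F t) / I) - ln (K / (k * I)) - k * ln (T - t)"
      using Tt R Ipos K k by (simp add: ln_div ln_mult ln_powr)
    show ?case unfolding e1 e2 r_def C'_def by (simp add: algebra_simps)
  qed
  from Lim_transform_eventually[OF L2[simplified] this]
  show "\<exists>C'. ((\<lambda>t. (p t + ln (1 - F t / I) *\<^sub>R coa) - (C' + ln (T - t) *\<^sub>R (v1 + k *\<^sub>R coa))) \<longlongrightarrow> 0) (at_left T)"
    by blast
qed


lemma part2:
  fixes a coa v2 C :: "'a::euclidean_space" and e p :: "real \<Rightarrow> 'a"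
  assumes T: "0 < T" and k: "0 < k" and c: "0 < c" and av2: "a \<bullet> v2 = 1 + k" and acoa: "a \<bullet> coa = 2"
    and conte: "continuous_on {0..<T} e" and e0: "e 0 = 0"
    and lim: "((\<lambda>t. e t - (C + ln (T - t) *\<^sub>R v2)) \<longlongrightarrow> 0) (at_left T)"
    and pdef: "p = (\<lambda>t. e t + ln (1 + c * integral {0..t} (\<lambda>s. exp (- (a \<bullet> e s)))) *\<^sub>R coa)"
  shows "continuous_on {0..<T} p" "p 0 = 0"
    "\<exists>C'. ((\<lambda>t. p t - (C' + ln (T - t) *\<^sub>R (v2 - k *\<^sub>R coa))) \<longlongrightarrow> 0) (at_left T)"
    "(\<lambda>s. exp (- (a \<bullet> p s))) integrable_on {0..T}"
    "integral {0..T} (\<lambda>s. exp (- (a \<bullet> p s))) = 1 / c"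
    "\<forall>t\<in>{0..<T}. e t = p t + ln (1 - integral {0..t} (\<lambda>s. exp (- (a \<bullet> p s))) / integral {0..T} (\<lambda>s. exp (- (a \<bullet> p s)))) *\<^sub>R coa"
proof -
  define h where "h s = exp (- (a \<bullet> e s))" for s
  define F where "F t = integral {0..t} h" for t
  define u where "u t = 1 + c * F t" for t
  define gp where "gp s = exp (- (a \<bullet> p s))" for s
  define r where "r t = e t - (C + ln (T - t) *\<^sub>R v2)" for t
  define K where "K = exp (- (a \<bullet> C))"
  have K: "0 < K" unfolding K_def by simp
  have p_eq: "p t = e t + ln (u t) *\<^sub>R coa" for t unfolding pdef u_def F_def h_def by simp
  have ar: "((\<lambda>t. a \<bullet> r t) \<longlongrightarrow> 0) (at_left T)"
    using tendsto_inner[OF tendsto_const lim, of a] unfolding r_def by simp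
  have hform: "h s = K * (T - s) powr (- k - 1) * exp (- (a \<bullet> r s))" if "s < T" for s
  proof -
    have "a \<bullet> e s = a \<bullet> C + ln (T - s) * (1 + k) + a \<bullet> r s"
      unfolding r_def by (simp add: inner_diff_right inner_add_right av2)
    then have "h s = exp (- (a \<bullet> C) + (- k - 1) * ln (T - s) - a \<bullet> r s)" unfolding h_def
      by (simp add: algebra_simps)
    also have "\<dots> = K * exp ((- k - 1) * ln (T - s)) * exp (- (a \<bullet> r s))"
      unfolding K_def by (simp add: exp_add exp_diff exp_minus field_simps)
    also have "exp ((- k - 1) * ln (T - s)) = (T - s) powr (- k - 1)"
      using that by (simp add: powr_def)
    finally show ?thesis .
  qed
  have ch: "continuous_on {0..<T} h" unfolding h_def by (intro continuous_intros conte)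
  have hpos: "0 < h s" for s unfolding h_def by simp
  have hlim: "((\<lambda>s. h s / (T - s) powr (- k - 1)) \<longlongrightarrow> K) (at_left T)"
  proof -
    have "((\<lambda>s. K * exp (- (a \<bullet> r s))) \<longlongrightarrow> K * exp (- 0)) (at_left T)"
      by (intro tendsto_intros ar)
    then have "((\<lambda>s. K * exp (- (a \<bullet> r s))) \<longlongrightarrow> K) (at_left T)" by simp
    moreover have "eventually (\<lambda>s. K * exp (- (a \<bullet> r s)) = h s / (T - s) powr (- k - 1)) (at_left T)"
      using ev_lt[OF T] by eventually_elim (simp add: hform)
    ultimately show ?thesis by (rule Lim_transform_eventually)
  qed
  have Fk: "((\<lambda>t. F t * (T - t) powr k) \<longlongrightarrow> K / k) (at_left T)"
    unfolding F_def by (rule L_head[OF T k ch hlim])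
  have chs: "continuous_on {x..y} h" if "0 \<le> x" "y < T" for x y
    using ch that by (rule_tac continuous_on_subset) auto
  have F0: "F 0 = 0" unfolding F_def by simp
  have Fnn: "0 \<le> F t" if "0 \<le> t" "t < T" for t
    unfolding F_def by (rule integral_nonneg[OF integrable_continuous_interval[OF chs]]) (use that hpos in \<open>auto intro: less_imp_le\<close>)
  have upos: "0 < u t" if "0 \<le> t" "t < T" for t using Fnn[OF that] c unfolding u_def by (simp add: add_pos_nonneg)
  have cF: "continuous_on {0..<T} F" unfolding F_def by (rule int_cont_lt[OF ch])
  have cu: "continuous_on {0..<T} u" unfolding u_def by (intro continuous_intros cF)
  show cp: "continuous_on {0..<T} p"
    unfolding p_eq by (intro continuous_intros conte continuous_on_ln cu) (use upos in \<open>auto simp: less_imp_neq[symmetric]\<close>)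
  show "p 0 = 0" unfolding p_eq u_def F0 e0 by simp
  define C' where "C' = C + ln (c * K / k) *\<^sub>R coa"
  have Lu: "((\<lambda>t. (T - t) powr k + c * (F t * (T - t) powr k)) \<longlongrightarrow> 0 + c * (K / k)) (at_left T)"
    by (intro tendsto_intros tendsto_Tpowr k Fk)
  have L1: "((\<lambda>t. ln ((T - t) powr k + c * (F t * (T - t) powr k)) - ln (c * K / k)) \<longlongrightarrow> ln (0 + c * (K / k)) - ln (c * K / k)) (at_left T)"
    by (intro tendsto_intros Lu) (use c K k in simp)
  have L2: "((\<lambda>t. r t + (ln ((T - t) powr k + c * (F t * (T - t) powr k)) - ln (c * K / k)) *\<^sub>R coa) \<longlongrightarrow> 0 + 0 *\<^sub>R coa) (at_left T)"
    by (intro tendsto_intros L1[simplified] lim[folded r_def])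
  have "eventually (\<lambda>t. r t + (ln ((T - t) powr k + c * (F t * (T - t) powr k)) - ln (c * K / k)) *\<^sub>R coa =
      p t - (C' + ln (T - t) *\<^sub>R (v2 - k *\<^sub>R coa))) (at_left T)"
    using ev_lt[OF T]
  proof eventually_elim
    case (elim t)
    then have Tt: "T - t > 0" and U: "u t > 0" using upos[of t] by auto
    have "(T - t) powr k + c * (F t * (T - t) powr k) = u t * (T - t) powr k" unfolding u_def by (simp add: algebra_simps)
    then have e2: "ln ((T - t) powr k + c * (F t * (T - t) powr k)) - ln (c * K / k) = ln (u t) - ln (c * K / k) + k * ln (T - t)"
      using Tt U by (simp add: ln_mult ln_powr)
    show ?case unfolding e2 p_eq r_def C'_def by (simp add: algebra_simps)
  qed
  from Lim_transform_eventually[OF L2[simplified] this]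
  show "\<exists>C'. ((\<lambda>t. p t - (C' + ln (T - t) *\<^sub>R (v2 - k *\<^sub>R coa))) \<longlongrightarrow> 0) (at_left T)" by blast
  have gpform: "gp s = h s / (u s)^2" if "0 \<le> s" "s < T" for s
  proof -
    have "a \<bullet> p s = a \<bullet> e s + 2 * ln (u s)" unfolding p_eq by (simp add: inner_add_right acoa)
    then have "gp s = h s * exp (- (2 * ln (u s)))" unfolding gp_def h_def by (simp add: exp_add[symmetric])
    also have "exp (- (2 * ln (u s))) = 1 / (u s)^2"
    proof -
      have "(u s) powr 2 = exp (2 * ln (u s))" using upos[OF that] by (simp add: powr_def)
      moreover have "(u s) powr 2 = (u s)^2" using upos[OF that] by (simp add: powr_realpow)
      ultimately have "exp (2 * ln (u s)) = (u s)^2" by simp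
      then show ?thesis by (simp add: exp_minus inverse_eq_divide)
    qed
    finally show ?thesis by simp
  qed
  have Gval: "integral {0..t} gp = (1 / c) * (1 - 1 / u t)" if t: "0 \<le> t" "t < T" for t
  proof -
    have "((\<lambda>s. h s / (u s)^2) has_integral ((1 / c) * (1 - 1 / u t) - (1 / c) * (1 - 1 / u 0))) {0..t}"
    proof (rule fundamental_theorem_of_calculus)
      show "0 \<le> t" by (rule t(1))
      fix x assume x: "x \<in> {0..t}"
      have dF: "(F has_real_derivative h x) (at x within {0..t})"
        unfolding F_def by (rule integral_has_real_derivative[OF chs[OF order_refl t(2)] x])
      have ux: "u x \<noteq> 0" using upos[of x] x t by auto
      have dU: "(u has_real_derivative c * h x) (at x within {0..t})"
        unfolding u_def[abs_def] by (auto intro!: derivative_eq_intros dF)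
      have "((\<lambda>s. (1 / c) * (1 - 1 / u s)) has_real_derivative h x / (u x)^2) (at x within {0..t})"
        using ux c by (auto intro!: derivative_eq_intros dU simp: field_simps power2_eq_square)
      then show "((\<lambda>s. (1 / c) * (1 - 1 / u s)) has_vector_derivative h x / (u x)^2) (at x within {0..t})"
        by (simp add: has_real_derivative_iff_has_vector_derivative)
    qed
    moreover have "u 0 = 1" unfolding u_def F0 by simp
    ultimately have "((\<lambda>s. h s / (u s)^2) has_integral (1 / c) * (1 - 1 / u t)) {0..t}" by simp
    then have "(gp has_integral (1 / c) * (1 - 1 / u t)) {0..t}"
      by (rule has_integral_eq[rotated]) (use gpform t in auto)
    then show ?thesis by (rule integral_unique)
  qed
  have cgp: "continuous_on {0..<T} gp" unfolding gp_def by (intro continuous_intros cp)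
  have igp: "gp integrable_on {0..T}"
  proof (rule L_int[OF T cgp])
    show "0 \<le> gp t" for t unfolding gp_def by simp
    fix t assume t: "0 \<le> t" "t < T"
    show "integral {0..t} gp \<le> 1 / c" unfolding Gval[OF t] using upos[OF t] c by (simp add: field_simps)
  qed
  show "(\<lambda>s. exp (- (a \<bullet> p s))) integrable_on {0..T}" using igp unfolding gp_def .
  have "((\<lambda>t. integral {0..t} gp) \<longlongrightarrow> integral {0..T} gp) (at T within {0..T})"
    using indefinite_integral_continuous_1[OF igp] T unfolding continuous_on_def by auto
  then have GL1: "((\<lambda>t. integral {0..t} gp) \<longlongrightarrow> integral {0..T} gp) (at_left T)"
    using at_within_Icc_at_left[OF T] by simp
  have inv0: "((\<lambda>t. (T - t) powr k / ((T - t) powr k + c * (F t * (T - t) powr k))) \<longlongrightarrow> 0 / (0 + c * (K / k))) (at_left T)"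
    by (intro tendsto_intros tendsto_Tpowr k Lu) (use c K k in simp)
  have "((\<lambda>t. (1 / c) * (1 - (T - t) powr k / ((T - t) powr k + c * (F t * (T - t) powr k)))) \<longlongrightarrow> (1 / c) * (1 - 0 / (0 + c * (K / k)))) (at_left T)"
    by (intro tendsto_intros inv0)
  then have GL2': "((\<lambda>t. (1 / c) * (1 - (T - t) powr k / ((T - t) powr k + c * (F t * (T - t) powr k)))) \<longlongrightarrow> 1 / c) (at_left T)"
    by simp
  have "eventually (\<lambda>t. (1 / c) * (1 - (T - t) powr k / ((T - t) powr k + c * (F t * (T - t) powr k))) = integral {0..t} gp) (at_left T)"
    using ev_lt[OF T]
  proof eventually_elim
    case (elim t)
    then have Tt: "(T - t) powr k > 0" and U: "u t > 0" using upos[of t] by auto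
    have eqd: "(T - t) powr k + c * (F t * (T - t) powr k) = u t * (T - t) powr k"
      unfolding u_def by (simp add: algebra_simps)
    have "(T - t) powr k / ((T - t) powr k + c * (F t * (T - t) powr k)) = 1 / u t"
      unfolding eqd using Tt U by simp
    then show ?case using Gval[of t] elim by simp
  qed
  from Lim_transform_eventually[OF GL2' this]
  have GL2: "((\<lambda>t. integral {0..t} gp) \<longlongrightarrow> 1 / c) (at_left T)" .
  have Ival: "integral {0..T} gp = 1 / c"
    using tendsto_unique[OF trivial_limit_at_left_real GL1 GL2] .
  show "integral {0..T} (\<lambda>s. exp (- (a \<bullet> p s))) = 1 / c" using Ival unfolding gp_def .
  show "\<forall>t\<in>{0..<T}. e t = p t + ln (1 - integral {0..t} (\<lambda>s. exp (- (a \<bullet> p s))) / integral {0..T} (\<lambda>s. exp (- (a \<bullet> p s)))) *\<^sub>R coa"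
  proof
    fix t assume "t \<in> {0..<T}"
    then have t: "0 \<le> t" "t < T" by auto
    have "1 - integral {0..t} gp / integral {0..T} gp = 1 / u t"
      unfolding Gval[OF t] Ival using c upos[OF t] by (simp add: field_simps)
    then have "ln (1 - integral {0..t} gp / integral {0..T} gp) = - ln (u t)"
      using upos[OF t] by (simp add: ln_div)
    then have "p t + ln (1 - integral {0..t} gp / integral {0..T} gp) *\<^sub>R coa = e t"
      using p_eq[of t] by simp
    moreover have "(\<lambda>s. exp (- (a \<bullet> p s))) = gp" by (simp add: gp_def fun_eq_iff)
    ultimately show "e t = p t + ln (1 - integral {0..t} (\<lambda>s. exp (- (a \<bullet> p s))) / integral {0..T} (\<lambda>s. exp (- (a \<bullet> p s)))) *\<^sub>R coa"
      by simp
  qed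
qed


lemma part3:
  fixes a coa :: "'a::euclidean_space" and e q :: "real \<Rightarrow> 'a"
  assumes T: "0 < T" and c: "0 < c" and acoa: "a \<bullet> coa = 2" and contq: "continuous_on {0..<T} q"
    and cI: "c = 1 / integral {0..T} (\<lambda>s. exp (- (a \<bullet> q s)))"
    and Rq: "\<forall>t\<in>{0..<T}. integral {0..t} (\<lambda>s. exp (- (a \<bullet> q s))) < integral {0..T} (\<lambda>s. exp (- (a \<bullet> q s)))"
    and eq: "\<forall>t\<in>{0..<T}. e t = q t + ln (1 - integral {0..t} (\<lambda>s. exp (- (a \<bullet> q s))) / integral {0..T} (\<lambda>s. exp (- (a \<bullet> q s)))) *\<^sub>R coa"
  shows "\<forall>t\<in>{0..<T}. q t = e t + ln (1 + c * integral {0..t} (\<lambda>s. exp (- (a \<bullet> e s)))) *\<^sub>R coa"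
proof -
  define gq where "gq s = exp (- (a \<bullet> q s))" for s
  define G where "G t = integral {0..t} gq" for t
  define I where "I = integral {0..T} gq"
  define u where "u t = 1 - c * G t" for t
  have I: "I = 1 / c" unfolding cI I_def gq_def by simp
  have cgq: "continuous_on {0..<T} gq" unfolding gq_def by (intro continuous_intros contq)
  have cgqs: "continuous_on {x..y} gq" if "0 \<le> x" "y < T" for x y
    using cgq that by (rule_tac continuous_on_subset) auto
  have upos: "0 < u t" if "0 \<le> t" "t < T" for t
  proof -
    have "G t < 1 / c" using Rq that I unfolding G_def I_def gq_def by auto
    then show ?thesis unfolding u_def using c by (simp add: field_simps)
  qed
  have G0: "G 0 = 0" unfolding G_def by simp
  have e_eq: "e t = q t + ln (u t) *\<^sub>R coa" if "0 \<le> t" "t < T" for t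
  proof -
    have "G t / I = c * G t" using I c by simp
    then show ?thesis using eq that unfolding u_def G_def I_def gq_def by auto
  qed
  have hform: "exp (- (a \<bullet> e s)) = gq s / (u s)^2" if "0 \<le> s" "s < T" for s
  proof -
    have "a \<bullet> e s = a \<bullet> q s + 2 * ln (u s)" unfolding e_eq[OF that] by (simp add: inner_add_right acoa)
    then have "exp (- (a \<bullet> e s)) = gq s * exp (- (2 * ln (u s)))" unfolding gq_def by (simp add: exp_add[symmetric])
    also have "exp (- (2 * ln (u s))) = 1 / (u s)^2"
    proof -
      have "(u s) powr 2 = exp (2 * ln (u s))" using upos[OF that] by (simp add: powr_def)
      moreover have "(u s) powr 2 = (u s)^2" using upos[OF that] by (simp add: powr_realpow)
      ultimately have "exp (2 * ln (u s)) = (u s)^2" by simp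
      then show ?thesis by (simp add: exp_minus inverse_eq_divide)
    qed
    finally show ?thesis by simp
  qed
  show ?thesis
  proof
    fix t assume "t \<in> {0..<T}"
    then have t: "0 \<le> t" "t < T" by auto
    have "((\<lambda>s. gq s / (u s)^2) has_integral ((1 / c) * (1 / u t) - (1 / c) * (1 / u 0))) {0..t}"
    proof (rule fundamental_theorem_of_calculus)
      show "0 \<le> t" by (rule t(1))
      fix x assume x: "x \<in> {0..t}"
      have dG: "(G has_real_derivative gq x) (at x within {0..t})"
        unfolding G_def by (rule integral_has_real_derivative[OF cgqs[OF order_refl t(2)] x])
      have ux: "u x \<noteq> 0" using upos[of x] x t by auto
      have dU: "(u has_real_derivative - (c * gq x)) (at x within {0..t})"
        unfolding u_def[abs_def] by (auto intro!: derivative_eq_intros dG)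
      have "((\<lambda>s. (1 / c) * (1 / u s)) has_real_derivative gq x / (u x)^2) (at x within {0..t})"
        using ux c by (auto intro!: derivative_eq_intros dU simp: field_simps power2_eq_square)
      then show "((\<lambda>s. (1 / c) * (1 / u s)) has_vector_derivative gq x / (u x)^2) (at x within {0..t})"
        by (simp add: has_real_derivative_iff_has_vector_derivative)
    qed
    moreover have "u 0 = 1" unfolding u_def G0 by simp
    ultimately have "((\<lambda>s. gq s / (u s)^2) has_integral (1 / c) * (1 / u t) - 1 / c) {0..t}" by simp
    then have "((\<lambda>s. exp (- (a \<bullet> e s))) has_integral (1 / c) * (1 / u t) - 1 / c) {0..t}"
      by (rule has_integral_eq[rotated]) (use hform t in auto)
    then have Fv: "integral {0..t} (\<lambda>s. exp (- (a \<bullet> e s))) = (1 / c) * (1 / u t) - 1 / c"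
      by (rule integral_unique)
    have "1 + c * integral {0..t} (\<lambda>s. exp (- (a \<bullet> e s))) = 1 / u t"
      unfolding Fv using c by (simp add: field_simps)
    then have "ln (1 + c * integral {0..t} (\<lambda>s. exp (- (a \<bullet> e s)))) = - ln (u t)"
      using upos[OF t] by (simp add: ln_div)
    then show "q t = e t + ln (1 + c * integral {0..t} (\<lambda>s. exp (- (a \<bullet> e s)))) *\<^sub>R coa"
      using e_eq[OF t] by simp
  qed
qed


lemma low_alt:
  "low_path D T u p \<longleftrightarrow> continuous_on {0..<T} p \<and> p 0 = 0 \<and>
     (\<exists>C. ((\<lambda>t. p t - (C + ln (T - t) *\<^sub>R (rho_vee D - inv u (rho_vee D)))) \<longlongrightarrow> 0) (at_left T))"
proof -
  define cc where "cc = cconst D u"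
  define L where "L t = ln (T - t) *\<^sub>R (rho_vee D - inv u (rho_vee D))" for t
  have "(\<exists>C. ((\<lambda>t. p t - (C + L t + cc)) \<longlongrightarrow> 0) (at_left T)) \<longleftrightarrow> (\<exists>C. ((\<lambda>t. p t - (C + L t)) \<longlongrightarrow> 0) (at_left T))"
  proof
    assume "\<exists>C. ((\<lambda>t. p t - (C + L t + cc)) \<longlongrightarrow> 0) (at_left T)"
    then obtain C where C: "((\<lambda>t. p t - (C + L t + cc)) \<longlongrightarrow> 0) (at_left T)" by blast
    have "(\<lambda>t. p t - (C + L t + cc)) = (\<lambda>t. p t - ((C + cc) + L t))" by (simp add: algebra_simps fun_eq_iff)
    then have "((\<lambda>t. p t - ((C + cc) + L t)) \<longlongrightarrow> 0) (at_left T)" using C by simp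
    then show "\<exists>C. ((\<lambda>t. p t - (C + L t)) \<longlongrightarrow> 0) (at_left T)" by blast
  next
    assume "\<exists>C. ((\<lambda>t. p t - (C + L t)) \<longlongrightarrow> 0) (at_left T)"
    then obtain C where C: "((\<lambda>t. p t - (C + L t)) \<longlongrightarrow> 0) (at_left T)" by blast
    have "(\<lambda>t. p t - (C + L t)) = (\<lambda>t. p t - ((C - cc) + L t + cc))" by (simp add: algebra_simps fun_eq_iff)
    then have "((\<lambda>t. p t - ((C - cc) + L t + cc)) \<longlongrightarrow> 0) (at_left T)" using C by simp
    then show "\<exists>C. ((\<lambda>t. p t - (C + L t + cc)) \<longlongrightarrow> 0) (at_left T)" by blast
  qed
  then show ?thesis unfolding low_path_def cc_def L_def by simp
qed

theorem mainTheorem12: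
  fixes D :: "'a::euclidean_space set" and T :: real and w :: "'a \<Rightarrow> 'a" and a :: 'a
  assumes D: "simple_system D"
    and T: "T > 0"
    and w: "w \<in> weyl D"
    and a: "a \<in> D"
    and len: "wlen D (w \<circ> refl a) = wlen D w + 1"
  shows
    "(\<forall>p. low_path D T w p \<longrightarrow>
        (\<lambda>s. exp (- (a \<bullet> p s))) integrable_on {0..T} \<and>
        1 / integral {0..T} (\<lambda>s. exp (- (a \<bullet> p s))) > 0 \<and>
        low_path D T (w \<circ> refl a) (eminf a T p))
   \<and>
    (\<forall>e c. low_path D T (w \<circ> refl a) e \<longrightarrow> c > 0 \<longrightarrow>
        (\<exists>p. low_path D T w p \<and>
             (\<lambda>s. exp (- (a \<bullet> p s))) integrable_on {0..T} \<and>
             c = 1 / integral {0..T} (\<lambda>s. exp (- (a \<bullet> p s))) \<and>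
             (\<forall>t\<in>{0..<T}. e t = eminf a T p t) \<and>
             (\<forall>t\<in>{0..<T}. p t = e t + ln (1 + c * integral {0..t} (\<lambda>s. exp (- (a \<bullet> e s)))) *\<^sub>R coroot a) \<and>
             (\<forall>q. low_path D T w q \<and>
                  (\<lambda>s. exp (- (a \<bullet> q s))) integrable_on {0..T} \<and>
                  c = 1 / integral {0..T} (\<lambda>s. exp (- (a \<bullet> q s))) \<and>
                  (\<forall>t\<in>{0..<T}. e t = eminf a T q t)
                  \<longrightarrow> (\<forall>t\<in>{0..<T}. q t = p t))))"
proof -
  note AS = alg_summary[OF D w a len]
  define \<rho> where "\<rho> = rho_vee D"
  define k where "k = a \<bullet> inv w \<rho>"
  define v1 where "v1 = \<rho> - inv w \<rho>"
  define v2 where "v2 = \<rho> - inv (w \<circ> refl a) \<rho>"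
  have kpos: "0 < k" using AS(3) unfolding k_def \<rho>_def .
  have v2: "v2 = v1 + k *\<^sub>R coroot a"
    unfolding v2_def v1_def k_def \<rho>_def AS(4) by (simp add: refl_def algebra_simps)
  have av1: "a \<bullet> v1 = 1 - k" unfolding v1_def k_def \<rho>_def using AS(1) by (simp add: inner_diff_right)
  have av2: "a \<bullet> v2 = 1 + k" unfolding v2 using av1 AS(2) by (simp add: inner_add_right)
  have low_w: "low_path D T w p \<longleftrightarrow> continuous_on {0..<T} p \<and> p 0 = 0 \<and>
     (\<exists>C. ((\<lambda>t. p t - (C + ln (T - t) *\<^sub>R v1)) \<longlongrightarrow> 0) (at_left T))" for p
    unfolding low_alt v1_def \<rho>_def ..
  have low_ws: "low_path D T (w \<circ> refl a) p \<longleftrightarrow> continuous_on {0..<T} p \<and> p 0 = 0 \<and>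
     (\<exists>C. ((\<lambda>t. p t - (C + ln (T - t) *\<^sub>R v2)) \<longlongrightarrow> 0) (at_left T))" for p
    unfolding low_alt v2_def \<rho>_def ..
  have P1: "(\<lambda>s. exp (- (a \<bullet> p s))) integrable_on {0..T} \<and>
        integral {0..T} (\<lambda>s. exp (- (a \<bullet> p s))) > 0 \<and>
        (\<forall>t\<in>{0..<T}. integral {0..t} (\<lambda>s. exp (- (a \<bullet> p s))) < integral {0..T} (\<lambda>s. exp (- (a \<bullet> p s)))) \<and>
        low_path D T (w \<circ> refl a) (eminf a T p)" if lp: "low_path D T w p" for p
  proof -
    obtain C where cont: "continuous_on {0..<T} p" and p0: "p 0 = 0"
      and lim: "((\<lambda>t. p t - (C + ln (T - t) *\<^sub>R v1)) \<longlongrightarrow> 0) (at_left T)"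
      using lp unfolding low_w by blast
    note R = part1(1-3)[OF T kpos av1 cont lim]
    note R4 = part1(4)[where coa="coroot a", OF T kpos av1 cont lim]
    define g where "g s = exp (- (a \<bullet> p s))" for s
    define I where "I = integral {0..T} g"
    have ig: "g integrable_on {0..T}" and Ipos: "I > 0" and FI: "\<forall>t\<in>{0..<T}. integral {0..t} g < I"
      using R(1,2,3) unfolding g_def[abs_def] I_def by auto
    have em: "eminf a T p t = p t + ln (1 - integral {0..t} g / I) *\<^sub>R coroot a" for t
      unfolding eminf_def g_def I_def ..
    have cg: "continuous_on {0..<T} g" unfolding g_def by (intro continuous_intros cont)
    have ce: "continuous_on {0..<T} (eminf a T p)"
      unfolding em[abs_def]
    proof -
      have "continuous_on {0..<T} (\<lambda>t. 1 - integral {0..t} g / I)"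
        by (intro continuous_intros int_cont_lt[OF cg]) (use Ipos in simp)
      then have "continuous_on {0..<T} (\<lambda>t. ln (1 - integral {0..t} g / I))"
        by (rule continuous_on_ln) (use FI Ipos in \<open>auto simp: field_simps\<close>)
      then show "continuous_on {0..<T} (\<lambda>t. p t + ln (1 - integral {0..t} g / I) *\<^sub>R coroot a)"
        using continuous_on_add[OF cont continuous_on_scaleR[OF _ continuous_on_const]] by blast
    qed
    have e0: "eminf a T p 0 = 0" unfolding em p0 by simp
    obtain C' where "((\<lambda>t. (p t + ln (1 - integral {0..t} g / I) *\<^sub>R coroot a) - (C' + ln (T - t) *\<^sub>R (v1 + k *\<^sub>R coroot a))) \<longlongrightarrow> 0) (at_left T)"
      using R4 unfolding g_def[abs_def] I_def by blast
    then have "((\<lambda>t. eminf a T p t - (C' + ln (T - t) *\<^sub>R v2)) \<longlongrightarrow> 0) (at_left T)"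
      unfolding em v2 .
    then have "low_path D T (w \<circ> refl a) (eminf a T p)" unfolding low_ws using ce e0 by blast
    then show ?thesis using ig Ipos FI unfolding g_def[abs_def] I_def by blast
  qed
  show ?thesis
  proof (rule conjI, goal_cases)
    case 1
    show ?case
    proof (intro allI impI)
      fix p assume "low_path D T w p"
      from P1[OF this] show "(\<lambda>s. exp (- (a \<bullet> p s))) integrable_on {0..T} \<and>
          1 / integral {0..T} (\<lambda>s. exp (- (a \<bullet> p s))) > 0 \<and> low_path D T (w \<circ> refl a) (eminf a T p)"
        by simp
    qed
  next
    case 2
    show ?case
    proof (intro allI impI)
    fix e and c :: real assume le: "low_path D T (w \<circ> refl a) e" and c: "0 < c"
    obtain C where conte: "continuous_on {0..<T} e" and e0: "e 0 = 0"
      and lim: "((\<lambda>t. e t - (C + ln (T - t) *\<^sub>R v2)) \<longlongrightarrow> 0) (at_left T)"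
      using le unfolding low_ws by blast
    define p where "p = (\<lambda>t. e t + ln (1 + c * integral {0..t} (\<lambda>s. exp (- (a \<bullet> e s)))) *\<^sub>R coroot a)"
    note R = part2[OF T kpos c av2 AS(2) conte e0 lim p_def]
    have v1': "v2 - k *\<^sub>R coroot a = v1" unfolding v2 by simp
    have lp: "low_path D T w p" unfolding low_w using R(1,2,3) v1' by auto
    show "\<exists>p. low_path D T w p \<and>
             (\<lambda>s. exp (- (a \<bullet> p s))) integrable_on {0..T} \<and>
             c = 1 / integral {0..T} (\<lambda>s. exp (- (a \<bullet> p s))) \<and>
             (\<forall>t\<in>{0..<T}. e t = eminf a T p t) \<and>
             (\<forall>t\<in>{0..<T}. p t = e t + ln (1 + c * integral {0..t} (\<lambda>s. exp (- (a \<bullet> e s)))) *\<^sub>R coroot a) \<and>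
             (\<forall>q. low_path D T w q \<and>
                  (\<lambda>s. exp (- (a \<bullet> q s))) integrable_on {0..T} \<and>
                  c = 1 / integral {0..T} (\<lambda>s. exp (- (a \<bullet> q s))) \<and>
                  (\<forall>t\<in>{0..<T}. e t = eminf a T q t)
                  \<longrightarrow> (\<forall>t\<in>{0..<T}. q t = p t))"
    proof (intro exI[of _ p] conjI allI impI)
      show "low_path D T w p" by (rule lp)
      show "(\<lambda>s. exp (- (a \<bullet> p s))) integrable_on {0..T}" by (rule R(4))
      show "c = 1 / integral {0..T} (\<lambda>s. exp (- (a \<bullet> p s)))" using R(5) by simp
      show "\<forall>t\<in>{0..<T}. e t = eminf a T p t" using R(6) unfolding eminf_def by simp
      show "\<forall>t\<in>{0..<T}. p t = e t + ln (1 + c * integral {0..t} (\<lambda>s. exp (- (a \<bullet> e s)))) *\<^sub>R coroot a"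
        unfolding p_def by simp
    next
      fix q assume h: "low_path D T w q \<and>
                  (\<lambda>s. exp (- (a \<bullet> q s))) integrable_on {0..T} \<and>
                  c = 1 / integral {0..T} (\<lambda>s. exp (- (a \<bullet> q s))) \<and>
                  (\<forall>t\<in>{0..<T}. e t = eminf a T q t)"
      have contq: "continuous_on {0..<T} q" using h unfolding low_w by blast
      have Rq: "\<forall>t\<in>{0..<T}. integral {0..t} (\<lambda>s. exp (- (a \<bullet> q s))) < integral {0..T} (\<lambda>s. exp (- (a \<bullet> q s)))"
        using P1[of q] h by blast
      have eq: "\<forall>t\<in>{0..<T}. e t = q t + ln (1 - integral {0..t} (\<lambda>s. exp (- (a \<bullet> q s))) / integral {0..T} (\<lambda>s. exp (- (a \<bullet> q s)))) *\<^sub>R coroot a"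
        using h unfolding eminf_def by blast
      have "\<forall>t\<in>{0..<T}. q t = e t + ln (1 + c * integral {0..t} (\<lambda>s. exp (- (a \<bullet> e s)))) *\<^sub>R coroot a"
        by (rule part3[OF T c AS(2) contq _ Rq eq]) (use h in blast)
      then show "\<forall>t\<in>{0..<T}. q t = p t" unfolding p_def by simp
    qed
  qed
  qed
qed


end
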